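(* Let $\Psi,\Lambda,\Upsilon$ and $\delta$ be as in the context, put $\bar\Lambda=\Lambda(\bar U,\vec0,0,0)$, and let $\{\bar U^\varepsilon\}\subseteq\mathbb R^n$ with $\bar U^\varepsilon\to\bar U$ as $\varepsilon\to0^+$. If $\delta$ is sufficiently small, there exist constants $c_V,\theta,c_W\in(0,1)$ independent of $\varepsilon$ such that for every sufficiently small $\varepsilon>0$ and every $\bar W_{cs}\in\mathbb R^k$ with $|\bar W_{cs}|\le\theta\delta$, the system $$V^\varepsilon(\zeta)=\bar U^\varepsilon+\int_{\delta/\varepsilon}^{\zeta}\Psi\big(V^\varepsilon(y),W^\varepsilon_{cs}(y),\varepsilon y,\varepsilon\big)W^\varepsilon_{cs}(y)\,dy,$$ $$W^\varepsilon_{cs}(\zeta)=e^{\bar\Lambda\zeta-\varepsilon\zeta^2I_k/2}\bar W_{cs}+\int_0^\zeta e^{\bar\Lambda(\zeta-y)-\varepsilon\zeta^2I_k/2+\varepsilon y^2I_k/2}\Big\{\big[\Lambda(\cdot)-\bar\Lambda\big]-\varepsilon y\big[\Upsilon(\cdot)-I_k\big]\Big\}W^\varepsilon_{cs}(y)\,dy,$$ where $(\cdot)=\big(V^\varepsilon(y),W^\varepsilon_{cs}(y),\varepsilon y,\varepsilon\big)$, admits a unique continuous solution $(V^\varepsilon,W^\varepsilon_{cs})$ on $[0,\delta/\varepsilon]$ satisfying, for every $\zeta\in[0,\delta/\varepsilon]$, $$|V^\varepsilon(\zeta)-\bar U|\le c_V\delta,\qquad |W^\varepsilon_{cs}(\zeta)|\le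 c_W e^{-c\zeta/2}\delta.$$
   Context: $A:\mathbb R^n\to\mathbb R^{n\times n}$ smooth and strictly hyperbolic with eigenvalues satisfying $\lambda_1(U)<\dots<\lambda_k(U)<-c<0<c<\lambda_{k+1}(U)<\dots<\lambda_n(U)$ for all $U$ (some $1\le k\le n-1$, $c>0$). $\bar U\in\mathbb R^n$ is fixed. $\Psi(V,W_{cs},\xi,\varepsilon)\in\mathbb R^{n\times k}$, $\Lambda(V,W_{cs},\xi,\varepsilon)\in\mathbb R^{k\times k}$, $\Upsilon(V,W_{cs},\xi,\varepsilon)\in\mathbb R^{k\times k}$ are smooth functions defined for $|V-\bar U|\le\delta$, $|W_{cs}|\le\delta$, $|\xi|\le\delta$, $|\varepsilon|\le\delta$, with $\Lambda(\bar U,\vec0,0,0)=\mathrm{Diag}(\lambda_1(\bar U),\dots,\lambda_k(\bar U))$ and $\Upsilon(\bar U,\vec0,0,0)=I_k$; they are the coefficients of the reduction $V'=\Psi W_{cs}$, $W_{cs}'=(\Lambda-\xi\Upsilon)W_{cs}$, $\xi'=\varepsilon$, $\varepsilon'=0$ of the self-similar viscous profile system to a center-stable manifold about $(\bar U,\vec0,0,0)$ (Lemma 3.1). *)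

theory Defs
  imports "HOL-Analysis.Analysis"
begin

primrec matpow :: "real^'k^'k \<Rightarrow> nat \<Rightarrow> real^'k^'k" where
  "matpow M 0 = mat 1"
| "matpow M (Suc m) = M ** matpow M m"

definition mexp :: "real^'k^'k \<Rightarrow> real^'k^'k" where
  "mexp M = (\<Sum>m. (1 / fact m) *\<^sub>R matpow M m)"

definition diag_mat :: "('k \<Rightarrow> real) \<Rightarrow> real^'k^'k" where
  "diag_mat d = (\<chi> i j. if i = j then d i else 0)"

(* C^\<infinity> on an open set S: f lies in a family of functions, each differentiable and
   continuous on S, which is closed under taking directional derivatives in every direction *)
definition smooth_on :: "'a::real_normed_vector set \<Rightarrow> ('a \<Rightarrow> 'b::real_normed_vector) \<Rightarrow> bool" where
  "smooth_on S f \<longleftrightarrow> (\<exists>F. f \<in> F \<and>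
     (\<forall>g\<in>F. continuous_on S g \<and> (\<forall>x\<in>S. g differentiable (at x)) \<and>
        (\<forall>v. (\<lambda>x. frechet_derivative g (at x) v) \<in> F)))"

definition real_eigenvalues :: "real^'n^'n \<Rightarrow> real set" where
  "real_eigenvalues M = {l. \<exists>v. v \<noteq> 0 \<and> M *v v = l *\<^sub>R v}"

definition hyperbolic_gap :: "real^'n^'n \<Rightarrow> 'k itself \<Rightarrow> real \<Rightarrow> bool" where
  "hyperbolic_gap M _ c \<longleftrightarrow>
     card (real_eigenvalues M) = CARD('n) \<and>
     card {l\<in>real_eigenvalues M. l < -c} = CARD('k) \<and>
     (\<forall>l\<in>real_eigenvalues M. l < -c \<or> c < l) \<and>
     (\<exists>l\<in>real_eigenvalues M. c < l)"

end

theory Submission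
  imports Defs
begin


lemma diag_mat_nth[simp]: "diag_mat a $ i $ j = (if i = j then a i else 0)"
  by (simp add: diag_mat_def)

lemma diag_mult_vec: "diag_mat a *v v = (\<chi> i. a i * v $ i)"
proof -
  have "(\<Sum>j\<in>UNIV. (if i = j then a i else 0) * v $ j) = a i * v $ i" for i
    by (simp add: if_distrib[of "\<lambda>x. x * _"] cong: if_cong)
  then show ?thesis by (simp add: vec_eq_iff matrix_vector_mult_def)
qed

lemma diag_mult_diag: "diag_mat a ** diag_mat b = diag_mat (\<lambda>i. a i * b i)"
proof -
  have "(\<Sum>k\<in>UNIV. (if i = k then a i else 0) * (if k = j then b k else 0)) = (if i = j then a i * b i else 0)" for i j
    by (simp add: if_distrib[of "\<lambda>x. x * _"] cong: if_cong)
  then show ?thesis by (simp add: vec_eq_iff matrix_matrix_mult_def)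
qed

lemma mat1_diag: "(mat 1 :: real^'k^'k) = diag_mat (\<lambda>i. 1)"
  by (simp add: vec_eq_iff mat_def)

lemma matpow_diag: "matpow (diag_mat a) m = diag_mat (\<lambda>i. a i ^ m)"
  by (induction m) (simp_all add: mat1_diag diag_mult_diag)

lemma mexp_diag: "mexp (diag_mat a) = diag_mat (\<lambda>i. exp (a i))"
proof -
  have "(\<lambda>m. (1 / fact m) *\<^sub>R matpow (diag_mat a) m) sums diag_mat (\<lambda>i. exp (a i))"
    unfolding sums_def
  proof (rule vec_tendstoI, rule vec_tendstoI)
    fix i j
    show "((\<lambda>x. (\<Sum>m<x. (1 / fact m) *\<^sub>R matpow (diag_mat a) m) $ i $ j) \<longlonglongrightarrow> diag_mat (\<lambda>i. exp (a i)) $ i $ j)"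
    proof (cases "i = j")
      case True
      have "(\<lambda>n. a i ^ n /\<^sub>R fact n) sums exp (a i)" by (rule exp_converges)
      then show ?thesis using True by (simp add: matpow_diag sums_def divide_inverse mult.commute)
    next
      case False
      then show ?thesis by (simp add: matpow_diag)
    qed
  qed
  then show ?thesis unfolding mexp_def by (rule sums_unique[symmetric])
qed

lemma norm_dmul_le:
  assumes "\<And>i. \<bar>a i\<bar> \<le> B"
  shows "norm (\<chi> i. a i * v $ i) \<le> B * norm (v :: real^'k)"
proof -
  have B: "0 \<le> B" using assms[of undefined] by linarith
  have "norm (\<chi> i. a i * v $ i) = L2_set (\<lambda>i. \<bar>a i * v $ i\<bar>) UNIV"
    by (simp add: norm_vec_def)
  also have "\<dots> \<le> L2_set (\<lambda>i. B * \<bar>v $ i\<bar>) UNIV"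
    by (rule L2_set_mono) (auto simp: abs_mult intro!: mult_right_mono assms)
  also have "\<dots> = B * norm v"
    by (simp add: norm_vec_def L2_set_right_distrib[OF B])
  finally show ?thesis .
qed

lemma norm_mv_le:
  fixes A :: "real^'n^'m"
  shows "norm (A *v x) \<le> (real CARD('m) * real CARD('n) * norm A) * norm x"
proof -
  have "\<bar>A $ i $ j\<bar> \<le> norm A" for i j
    using order_trans[OF component_le_norm_cart[of "A $ i" j] Finite_Cartesian_Product.norm_nth_le[of A i]] by simp
  then have "onorm ((*v) A) \<le> real CARD('m) * real CARD('n) * norm A"
    by (rule onorm_le_matrix_component)
  moreover have "norm (A *v x) \<le> onorm ((*v) A) * norm x"
    by (rule onorm) simp
  ultimately show ?thesis
    using order_trans mult_right_mono[OF _ norm_ge_zero] by blast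
qed

lemma norm_tuple_le: "norm (a, b, x, e) \<le> norm a + norm b + \<bar>x\<bar> + \<bar>e::real\<bar>"
proof -
  have "norm (a, b, x, e) \<le> norm a + norm (b, x, e)" by (rule norm_Pair_le)
  also have "norm (b, x, e) \<le> norm b + norm (x, e)" by (rule norm_Pair_le)
  also have "norm (x, e) \<le> norm x + norm e" by (rule norm_Pair_le)
  finally show ?thesis by simp
qed

lemma exp_int1:
  assumes c: "(c::real) > 0" and ab: "a \<le> b"
  shows "((\<lambda>y. exp (- c * y / 2)) has_integral (2 / c) * (exp (- c * a / 2) - exp (- c * b / 2))) {a..b}"
proof -
  have "((\<lambda>y. - (2 / c) * exp (- c * y / 2)) has_vector_derivative exp (- c * y / 2)) (at y within {a..b})" for y
    unfolding has_real_derivative_iff_has_vector_derivative[symmetric]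
    using c by (auto intro!: derivative_eq_intros simp: field_simps)
  from fundamental_theorem_of_calculus[OF ab this]
  show ?thesis by (simp add: algebra_simps)
qed

lemma exp_int2:
  assumes c: "(c::real) > 0" and ab: "0 \<le> z"
  shows "((\<lambda>y. exp (- c * (z - y) / 2)) has_integral (2 / c) * (1 - exp (- c * z / 2))) {0..z}"
proof -
  have "((\<lambda>y. (2 / c) * exp (- c * (z - y) / 2)) has_vector_derivative exp (- c * (z - y) / 2)) (at y within {0..z})" for y
    unfolding has_real_derivative_iff_has_vector_derivative[symmetric]
    using c by (auto intro!: derivative_eq_intros simp: field_simps)
  from fundamental_theorem_of_calculus[OF ab this]
  show ?thesis by (simp add: algebra_simps)
qed

lemma int_bound1:
  fixes f :: "real \<Rightarrow> 'a::euclidean_space"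
  assumes c: "c > 0" and ab: "a \<le> b" and a0: "0 \<le> a" and K: "0 \<le> K"
    and f: "continuous_on {a..b} f"
    and le: "\<And>y. y \<in> {a..b} \<Longrightarrow> norm (f y) \<le> K * exp (- c * y / 2)"
  shows "norm (integral {a..b} f) \<le> K * (2 / c)"
proof -
  have g: "((\<lambda>y. K * exp (- c * y / 2)) has_integral K * ((2 / c) * (exp (- c * a / 2) - exp (- c * b / 2)))) {a..b}"
    by (rule has_integral_mult_right[OF exp_int1[OF c ab]])
  have "norm (integral {a..b} f) \<le> integral {a..b} (\<lambda>y. K * exp (- c * y / 2))"
    by (rule integral_norm_bound_integral[OF integrable_continuous_interval[OF f] has_integral_integrable[OF g] le])
  also have "\<dots> = K * ((2 / c) * (exp (- c * a / 2) - exp (- c * b / 2)))"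
    using g by (rule integral_unique)
  also have "\<dots> \<le> K * (2 / c)"
  proof -
    have "exp (- c * a / 2) \<le> 1" using c a0 by simp
    then have "exp (- c * a / 2) - exp (- c * b / 2) \<le> 1"
      using exp_gt_zero[of "- c * b / 2"] by linarith
    then have "(2 / c) * (exp (- c * a / 2) - exp (- c * b / 2)) \<le> (2 / c) * 1"
      using c by (intro mult_left_mono) auto
    then have "K * ((2 / c) * (exp (- c * a / 2) - exp (- c * b / 2))) \<le> K * ((2 / c) * 1)"
      using K by (rule mult_left_mono)
    then show ?thesis by simp
  qed
  finally show ?thesis .
qed

lemma int_bound2:
  fixes f :: "real \<Rightarrow> 'a::euclidean_space"
  assumes c: "c > 0" and z: "0 \<le> z" and K: "0 \<le> K"
    and f: "continuous_on {0..z} f"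
    and le: "\<And>y. y \<in> {0..z} \<Longrightarrow> norm (f y) \<le> K * exp (- c * (z - y) / 2)"
  shows "norm (integral {0..z} f) \<le> K * (2 / c)"
proof -
  have g: "((\<lambda>y. K * exp (- c * (z - y) / 2)) has_integral K * ((2 / c) * (1 - exp (- c * z / 2)))) {0..z}"
    by (rule has_integral_mult_right[OF exp_int2[OF c z]])
  have "norm (integral {0..z} f) \<le> integral {0..z} (\<lambda>y. K * exp (- c * (z - y) / 2))"
    by (rule integral_norm_bound_integral[OF integrable_continuous_interval[OF f] has_integral_integrable[OF g] le])
  also have "\<dots> = K * ((2 / c) * (1 - exp (- c * z / 2)))"
    using g by (rule integral_unique)
  also have "\<dots> \<le> K * (2 / c)"
  proof -
    have "1 - exp (- c * z / 2) \<le> 1"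
      using exp_gt_zero[of "- c * z / 2"] by linarith
    then have "(2 / c) * (1 - exp (- c * z / 2)) \<le> (2 / c) * 1"
      using c by (intro mult_left_mono) auto
    then have "K * ((2 / c) * (1 - exp (- c * z / 2))) \<le> K * ((2 / c) * 1)"
      using K by (rule mult_left_mono)
    then show ?thesis by simp
  qed
  finally show ?thesis .
qed


lemma smooth_cont:
  assumes "smooth_on D f" "K \<subseteq> D"
  shows "continuous_on K f"
  using assms unfolding smooth_on_def by (meson continuous_on_subset)

lemma smooth_lip:
  fixes f :: "'a::euclidean_space \<Rightarrow> 'b::real_normed_vector"
  assumes sm: "smooth_on D f" and KD: "K \<subseteq> D" and cK: "compact K" and vK: "convex K"
  shows "\<exists>B. \<forall>x\<in>K. \<forall>y\<in>K. norm (f x - f y) \<le> B * norm (x - y)"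
proof -
  obtain F where fF: "f \<in> F" and H: "\<And>g. g \<in> F \<Longrightarrow> continuous_on D g \<and> (\<forall>x\<in>D. g differentiable (at x)) \<and>
        (\<forall>v. (\<lambda>x. frechet_derivative g (at x) v) \<in> F)"
    using sm unfolding smooth_on_def by blast
  have "\<exists>Bb. \<forall>x\<in>K. norm (frechet_derivative f (at x) b) \<le> Bb" for b
  proof -
    have "(\<lambda>x. frechet_derivative f (at x) b) \<in> F" using H[OF fF] by blast
    then have "continuous_on K (\<lambda>x. frechet_derivative f (at x) b)"
      using H KD continuous_on_subset by blast
    then have "bounded ((\<lambda>x. frechet_derivative f (at x) b) ` K)"
      using cK compact_continuous_image compact_imp_bounded by blast
    then show ?thesis unfolding bounded_iff by blast
  qed
  then obtain Bf where Bf: "\<And>b x. x \<in> K \<Longrightarrow> norm (frechet_derivative f (at x) b) \<le> Bf b"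
    by metis
  define B where "B = (\<Sum>b\<in>Basis. Bf b)"
  have der: "(f has_derivative frechet_derivative f (at x)) (at x within K)" if "x \<in> K" for x
  proof -
    have "f differentiable (at x)" using H[OF fF] KD that by blast
    then have "(f has_derivative frechet_derivative f (at x)) (at x)"
      by (simp add: frechet_derivative_works)
    then show ?thesis by (rule has_derivative_at_withinI)
  qed
  have on: "onorm (frechet_derivative f (at x)) \<le> B" if x: "x \<in> K" for x
  proof (rule onorm_le)
    fix h :: 'a
    let ?f' = "frechet_derivative f (at x)"
    have lin: "linear ?f'"
      using der[OF x] has_derivative_linear by blast
    have "?f' h = ?f' (\<Sum>b\<in>Basis. (h \<bullet> b) *\<^sub>R b)"
      by (simp add: euclidean_representation)
    also have "\<dots> = (\<Sum>b\<in>Basis. (h \<bullet> b) *\<^sub>R ?f' b)"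
      by (simp add: linear_sum[OF lin] linear_scale[OF lin])
    finally have "norm (?f' h) \<le> (\<Sum>b\<in>Basis. norm ((h \<bullet> b) *\<^sub>R ?f' b))"
      using norm_sum by metis
    also have "\<dots> \<le> (\<Sum>b\<in>Basis. norm h * Bf b)"
    proof (rule sum_mono)
      fix b :: 'a assume b: "b \<in> Basis"
      have "\<bar>h \<bullet> b\<bar> * norm (?f' b) \<le> norm h * Bf b"
        by (rule mult_mono[OF Basis_le_norm[OF b] Bf[OF x]]) auto
      then show "norm ((h \<bullet> b) *\<^sub>R ?f' b) \<le> norm h * Bf b" by simp
    qed
    also have "\<dots> = B * norm h" by (simp add: B_def sum_distrib_left mult.commute)
    finally show "norm (?f' h) \<le> B * norm h" .
  qed
  show ?thesis
    using differentiable_bound[OF vK der on] by blast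
qed


definition inbox :: "real^'n \<Rightarrow> real \<Rightarrow> real^'n \<Rightarrow> real^'k \<Rightarrow> real \<Rightarrow> real \<Rightarrow> bool" where
  "inbox Ub r V W \<xi> e \<longleftrightarrow> norm (V - Ub) \<le> r \<and> norm W \<le> r \<and> \<bar>\<xi>\<bar> \<le> r \<and> \<bar>e\<bar> \<le> r"

definition boxset :: "real^'n \<Rightarrow> real \<Rightarrow> ((real^'n) \<times> (real^'k) \<times> real \<times> real) set" where
  "boxset Ub r = {(V, W, \<xi>, e). inbox Ub r V W \<xi> e}"

lemma cont_comp4:
  assumes F: "continuous_on (boxset Ub r) (\<lambda>(V, W, \<xi>, e). F V W \<xi> e)"
    and v: "continuous_on I v" and w: "continuous_on I w"
    and xi: "continuous_on I xi" and ee: "continuous_on I ee"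
    and inb: "\<And>y. y \<in> I \<Longrightarrow> inbox Ub r (v y) (w y) (xi y) (ee y)"
  shows "continuous_on I (\<lambda>y. F (v y) (w y) (xi y) (ee y))"
proof -
  have "continuous_on I (\<lambda>y. (\<lambda>(V, W, \<xi>, e). F V W \<xi> e) (v y, w y, xi y, ee y))"
    by (rule continuous_on_compose2[OF F]) (auto intro!: continuous_intros v w xi ee simp: boxset_def inb)
  then show ?thesis by simp
qed

lemma cont_mv:
  fixes A :: "real \<Rightarrow> real^'m^'n"
  assumes "continuous_on S A" "continuous_on S v"
  shows "continuous_on S (\<lambda>y. A y *v v y)"
  unfolding matrix_vector_mult_def by (intro continuous_intros assms)

lemma ext_apply:
  fixes F :: "real \<Rightarrow> 'b::metric_space"
  assumes "continuous_on {a..b} F"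
  shows "apply_bcontfun (Bcontfun (\<lambda>t. F (clamp a b t))) = (\<lambda>t. F (clamp a b t))"
proof -
  have c: "continuous_on (cbox a b) F" using assms by simp
  have "(\<lambda>t. F (clamp a b t)) \<in> bcontfun"
    unfolding bcontfun_def
    by (auto intro!: clamp_continuous_on[OF c] clamp_bounded compact_imp_bounded[OF compact_continuous_image] c)
  then show ?thesis by (rule Bcontfun_inverse)
qed

lemma clamp_real: "a \<le> b \<Longrightarrow> clamp a b (t::real) \<in> {a..b}"
  using clamp_in_interval[of a b t] by (simp add: cbox_interval)

lemma clamp_real_cancel: "t \<in> {a..b} \<Longrightarrow> clamp a b (t::real) = t"
  using clamp_cancel_cbox[of t a b] by (simp add: cbox_interval)

lemma isCont_apply_bcontfun: "isCont (\<lambda>f. apply_bcontfun f t) f0"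
  unfolding continuous_at_eps_delta
  using dist_bounded le_less_trans by blast

locale ctx =
  fixes c \<delta>\<^sub>1 Lp M :: real
    and Ubar :: "real^'n"
    and \<Psi> :: "real^'n \<Rightarrow> real^'k \<Rightarrow> real \<Rightarrow> real \<Rightarrow> real^'k^'n"
    and \<Lambda> :: "real^'n \<Rightarrow> real^'k \<Rightarrow> real \<Rightarrow> real \<Rightarrow> real^'k^'k"
    and \<Upsilon> :: "real^'n \<Rightarrow> real^'k \<Rightarrow> real \<Rightarrow> real \<Rightarrow> real^'k^'k"
    and d :: "'k \<Rightarrow> real"
  assumes c_pos: "c > 0" and \<delta>\<^sub>1_pos: "\<delta>\<^sub>1 > 0" and Lp1: "Lp \<ge> 1" and Mc: "M \<ge> c"
    and d_neg: "\<And>i. d i < - c"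
    and \<Lambda>0: "\<Lambda> Ubar 0 0 0 = diag_mat d" and \<Upsilon>0: "\<Upsilon> Ubar 0 0 0 = mat 1"
    and cont\<Psi>: "continuous_on (boxset Ubar \<delta>\<^sub>1) (\<lambda>(V, W, \<xi>, e). \<Psi> V W \<xi> e)"
    and cont\<Lambda>: "continuous_on (boxset Ubar \<delta>\<^sub>1) (\<lambda>(V, W, \<xi>, e). \<Lambda> V W \<xi> e)"
    and cont\<Upsilon>: "continuous_on (boxset Ubar \<delta>\<^sub>1) (\<lambda>(V, W, \<xi>, e). \<Upsilon> V W \<xi> e)"
    and lip\<Psi>: "\<And>V1 W1 \<xi>1 e1 V2 W2 \<xi>2 e2 w. inbox Ubar \<delta>\<^sub>1 V1 W1 \<xi>1 e1 \<Longrightarrow> inbox Ubar \<delta>\<^sub>1 V2 W2 \<xi>2 e2 \<Longrightarrow>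
       norm ((\<Psi> V1 W1 \<xi>1 e1 - \<Psi> V2 W2 \<xi>2 e2) *v w) \<le> Lp * (norm (V1 - V2) + norm (W1 - W2) + \<bar>\<xi>1 - \<xi>2\<bar> + \<bar>e1 - e2\<bar>) * norm w"
    and lip\<Lambda>: "\<And>V1 W1 \<xi>1 e1 V2 W2 \<xi>2 e2 w. inbox Ubar \<delta>\<^sub>1 V1 W1 \<xi>1 e1 \<Longrightarrow> inbox Ubar \<delta>\<^sub>1 V2 W2 \<xi>2 e2 \<Longrightarrow>
       norm ((\<Lambda> V1 W1 \<xi>1 e1 - \<Lambda> V2 W2 \<xi>2 e2) *v w) \<le> Lp * (norm (V1 - V2) + norm (W1 - W2) + \<bar>\<xi>1 - \<xi>2\<bar> + \<bar>e1 - e2\<bar>) * norm w"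
    and lip\<Upsilon>: "\<And>V1 W1 \<xi>1 e1 V2 W2 \<xi>2 e2 w. inbox Ubar \<delta>\<^sub>1 V1 W1 \<xi>1 e1 \<Longrightarrow> inbox Ubar \<delta>\<^sub>1 V2 W2 \<xi>2 e2 \<Longrightarrow>
       norm ((\<Upsilon> V1 W1 \<xi>1 e1 - \<Upsilon> V2 W2 \<xi>2 e2) *v w) \<le> Lp * (norm (V1 - V2) + norm (W1 - W2) + \<bar>\<xi>1 - \<xi>2\<bar> + \<bar>e1 - e2\<bar>) * norm w"
    and bnd\<Psi>: "\<And>V W \<xi> e w. inbox Ubar \<delta>\<^sub>1 V W \<xi> e \<Longrightarrow> norm (\<Psi> V W \<xi> e *v w) \<le> M * norm w"
begin

definition "lam = 8 * M / c"
definition "cW = min (1/2) (c / (8 * M))"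
definition "\<theta> = cW / 2"

lemma M_pos: "M > 0" using Mc c_pos by linarith
lemma lam_ge: "lam \<ge> 8" using Mc c_pos by (simp add: lam_def field_simps)
lemma cW_pos: "cW > 0" using M_pos c_pos by (simp add: cW_def)
lemma cW_le: "cW \<le> 1/2" by (simp add: cW_def)
lemma cW_M: "M * cW * (2 / c) \<le> 1/4"
proof -
  have "cW \<le> c / (8 * M)" by (simp add: cW_def)
  then have "M * cW \<le> M * (c / (8 * M))" using M_pos by (intro mult_left_mono) auto
  also have "\<dots> = c / 8" using M_pos by simp
  finally have "M * cW * (2 / c) \<le> c / 8 * (2 / c)" using c_pos by (intro mult_right_mono) auto
  also have "\<dots> = 1/4" using c_pos by simp
  finally show ?thesis .
qed
lemma lam_M: "M / lam * (2 / c) = 1/4"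
  using M_pos c_pos by (simp add: lam_def field_simps)

end

locale fp = ctx c \<delta>\<^sub>1 Lp M Ubar \<Psi> \<Lambda> \<Upsilon> d
  for c \<delta>\<^sub>1 Lp M :: real
    and Ubar :: "real^'n"
    and \<Psi> :: "real^'n \<Rightarrow> real^'k \<Rightarrow> real \<Rightarrow> real \<Rightarrow> real^'k^'n"
    and \<Lambda> :: "real^'n \<Rightarrow> real^'k \<Rightarrow> real \<Rightarrow> real \<Rightarrow> real^'k^'k"
    and \<Upsilon> :: "real^'n \<Rightarrow> real^'k \<Rightarrow> real \<Rightarrow> real \<Rightarrow> real^'k^'k"
    and d :: "'k \<Rightarrow> real" +
  fixes \<delta> \<epsilon> :: real and Wbar :: "real^'k" and U0 :: "real^'n"
  assumes \<delta>_pos: "\<delta> > 0" and \<delta>_le1: "\<delta> \<le> \<delta>\<^sub>1" and \<delta>_le_one: "\<delta> \<le> 1"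
    and \<delta>_small: "100 * Lp * lam * \<delta> \<le> c"
    and \<epsilon>_pos: "\<epsilon> > 0" and \<epsilon>_le: "\<epsilon> \<le> \<delta>"
    and U0: "norm (U0 - Ubar) \<le> \<delta> / 4"
    and Wbar: "norm Wbar \<le> \<theta> * \<delta>"
begin

definition "L = \<delta> / \<epsilon>"
definition "om y = exp (- c * y / 2) / lam"
definition Vx :: "(real \<Rightarrow>\<^sub>C (real^'n)) \<times> (real \<Rightarrow>\<^sub>C (real^'k)) \<Rightarrow> real \<Rightarrow> real^'n" where "Vx x y = apply_bcontfun (fst x) y"
definition Wx :: "(real \<Rightarrow>\<^sub>C (real^'n)) \<times> (real \<Rightarrow>\<^sub>C (real^'k)) \<Rightarrow> real \<Rightarrow> real^'k" where "Wx x y = om y *\<^sub>R apply_bcontfun (snd x) y"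
definition "h1 x y = \<Psi> (Vx x y) (Wx x y) (\<epsilon> * y) \<epsilon> *v Wx x y"
definition "g2 x y = ((\<Lambda> (Vx x y) (Wx x y) (\<epsilon> * y) \<epsilon> - diag_mat d)
    - (\<epsilon> * y) *\<^sub>R (\<Upsilon> (Vx x y) (Wx x y) (\<epsilon> * y) \<epsilon> - mat 1)) *v Wx x y"
definition Ez :: "real \<Rightarrow> real \<Rightarrow> real^'k^'k" where "Ez z y = diag_mat (\<lambda>i. exp ((z - y) * d i - \<epsilon> * z\<^sup>2 / 2 + \<epsilon> * y\<^sup>2 / 2))"
definition E0 :: "real \<Rightarrow> real^'k^'k" where "E0 z = diag_mat (\<lambda>i. exp (z * d i - \<epsilon> * z\<^sup>2 / 2))"
definition Ey :: "real \<Rightarrow> real^'k^'k" where "Ey y = diag_mat (\<lambda>i. exp (- y * d i + \<epsilon> * y\<^sup>2 / 2))"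
definition "T1 x z = U0 - integral {z..L} (h1 x)"
definition "T2 x z = E0 z *v Wbar + integral {0..z} (\<lambda>y. Ez z y *v g2 x y)"
definition S :: "((real \<Rightarrow>\<^sub>C (real^'n)) \<times> (real \<Rightarrow>\<^sub>C (real^'k))) set" where "S = {x. \<forall>t\<in>{0..L}. norm (Vx x t - Ubar) \<le> \<delta> / 2 \<and> norm (apply_bcontfun (snd x) t) \<le> lam * cW * \<delta>}"

lemma L_pos: "L > 0" using \<delta>_pos \<epsilon>_pos by (simp add: L_def)
lemma eps_L: "\<epsilon> * L = \<delta>" using \<epsilon>_pos by (simp add: L_def)
lemma om_pos: "om y > 0" using lam_ge by (simp add: om_def)
lemma Lp\<delta>: "Lp * \<delta> * 800 \<le> c"
proof -
  have "Lp * \<delta> * 8 \<le> Lp * \<delta> * lam" using lam_ge Lp1 \<delta>_pos by (intro mult_left_mono) auto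
  then show ?thesis using \<delta>_small by (simp add: algebra_simps)
qed

lemma Wx_bound:
  assumes "x \<in> S" "y \<in> {0..L}"
  shows "norm (Wx x y) \<le> cW * \<delta> * exp (- c * y / 2)"
proof -
  have "norm (Wx x y) = om y * norm (apply_bcontfun (snd x) y)"
    using om_pos[of y] by (simp add: Wx_def)
  also have "\<dots> \<le> om y * (lam * cW * \<delta>)"
    using assms om_pos[of y] unfolding S_def by (intro mult_left_mono) auto
  also have "\<dots> = cW * \<delta> * exp (- c * y / 2)"
    using lam_ge by (simp add: om_def)
  finally show ?thesis .
qed

lemma Wx_bound2:
  assumes "x \<in> S" "y \<in> {0..L}"
  shows "norm (Wx x y) \<le> \<delta> / 2"
proof -
  have "cW * \<delta> * exp (- c * y / 2) \<le> (1/2) * \<delta> * 1"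
    using assms c_pos cW_le cW_pos \<delta>_pos by (intro mult_mono) auto
  then show ?thesis using Wx_bound[OF assms] by simp
qed

lemma Vx_bound:
  assumes "x \<in> S" "y \<in> {0..L}"
  shows "norm (Vx x y - Ubar) \<le> \<delta> / 2"
  using assms unfolding S_def by auto

lemma inS_box:
  assumes "x \<in> S" "y \<in> {0..L}"
  shows "inbox Ubar \<delta>\<^sub>1 (Vx x y) (Wx x y) (\<epsilon> * y) \<epsilon>"
proof -
  have "\<epsilon> * y \<le> \<epsilon> * L" using assms \<epsilon>_pos by (intro mult_left_mono) auto
  then have "\<bar>\<epsilon> * y\<bar> \<le> \<delta>" using assms \<epsilon>_pos eps_L by auto
  then show ?thesis using Vx_bound[OF assms] Wx_bound2[OF assms] \<delta>_le1 \<epsilon>_le \<epsilon>_pos \<delta>_pos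
    unfolding inbox_def by auto
qed

lemma dist0:
  assumes "x \<in> S" "y \<in> {0..L}"
  shows "norm (Vx x y - Ubar) + norm (Wx x y - 0) + \<bar>\<epsilon> * y - 0\<bar> + \<bar>\<epsilon> - 0\<bar> \<le> 3 * \<delta>"
proof -
  have "\<epsilon> * y \<le> \<epsilon> * L" using assms \<epsilon>_pos by (intro mult_left_mono) auto
  then have "\<bar>\<epsilon> * y\<bar> \<le> \<delta>" using assms \<epsilon>_pos eps_L by auto
  then show ?thesis using Vx_bound[OF assms] Wx_bound2[OF assms] \<epsilon>_le \<epsilon>_pos by auto
qed

lemma box0: "inbox Ubar \<delta>\<^sub>1 Ubar 0 0 0"
  using \<delta>\<^sub>1_pos by (simp add: inbox_def)

lemma cont_Vx: "continuous_on A (Vx x)"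
  unfolding Vx_def by simp

lemma cont_Wx: "continuous_on A (Wx x)"
  unfolding Wx_def om_def by (intro continuous_intros continuous_on_apply_bcontfun) (use lam_ge in auto)

lemma cont_h1:
  assumes "x \<in> S"
  shows "continuous_on {0..L} (h1 x)"
  unfolding h1_def
  by (intro cont_mv cont_comp4[OF cont\<Psi>] cont_Vx cont_Wx continuous_intros inS_box[OF assms]) auto

lemma cont_g2:
  assumes "x \<in> S"
  shows "continuous_on {0..L} (g2 x)"
  unfolding g2_def
  by (intro cont_mv cont_comp4[OF cont\<Lambda>] cont_comp4[OF cont\<Upsilon>] cont_Vx cont_Wx continuous_intros inS_box[OF assms]) auto

end


lemma cont_if_const[continuous_intros]:
  "continuous_on S f \<Longrightarrow> continuous_on S g \<Longrightarrow> continuous_on S (\<lambda>x. if P then f x else g x)"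
  by (cases P) auto

context fp begin

lemma g2_bound:
  assumes x: "x \<in> S" and y: "y \<in> {0..L}"
  shows "norm (g2 x y) \<le> 6 * Lp * \<delta> * norm (Wx x y)"
proof -
  let ?V = "Vx x y" and ?W = "Wx x y"
  have ib: "inbox Ubar \<delta>\<^sub>1 ?V ?W (\<epsilon> * y) \<epsilon>" by (rule inS_box[OF x y])
  have ds: "norm (?V - Ubar) + norm (?W - 0) + \<bar>\<epsilon> * y - 0\<bar> + \<bar>\<epsilon> - 0\<bar> \<le> 3 * \<delta>" by (rule dist0[OF x y])
  have ey: "\<bar>\<epsilon> * y\<bar> \<le> \<delta>"
  proof -
    have "\<epsilon> * y \<le> \<epsilon> * L" using y \<epsilon>_pos by (intro mult_left_mono) auto
    then show ?thesis using y \<epsilon>_pos eps_L by auto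
  qed
  have eq: "g2 x y = (\<Lambda> ?V ?W (\<epsilon> * y) \<epsilon> - \<Lambda> Ubar 0 0 0) *v ?W - (\<epsilon> * y) *\<^sub>R ((\<Upsilon> ?V ?W (\<epsilon> * y) \<epsilon> - \<Upsilon> Ubar 0 0 0) *v ?W)"
    unfolding g2_def \<Lambda>0 \<Upsilon>0 by (simp add: matrix_vector_mult_diff_rdistrib scaleR_matrix_vector_assoc[symmetric])
  have n1: "norm ((\<Lambda> ?V ?W (\<epsilon> * y) \<epsilon> - \<Lambda> Ubar 0 0 0) *v ?W) \<le> Lp * (3 * \<delta>) * norm ?W"
  proof -
    have "norm ((\<Lambda> ?V ?W (\<epsilon> * y) \<epsilon> - \<Lambda> Ubar 0 0 0) *v ?W) \<le> Lp * (norm (?V - Ubar) + norm (?W - 0) + \<bar>\<epsilon> * y - 0\<bar> + \<bar>\<epsilon> - 0\<bar>) * norm ?W"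
      by (rule lip\<Lambda>[OF ib box0])
    also have "\<dots> \<le> Lp * (3 * \<delta>) * norm ?W"
      using ds Lp1 by (intro mult_right_mono mult_left_mono) auto
    finally show ?thesis .
  qed
  have n2: "norm ((\<Upsilon> ?V ?W (\<epsilon> * y) \<epsilon> - \<Upsilon> Ubar 0 0 0) *v ?W) \<le> Lp * (3 * \<delta>) * norm ?W"
  proof -
    have "norm ((\<Upsilon> ?V ?W (\<epsilon> * y) \<epsilon> - \<Upsilon> Ubar 0 0 0) *v ?W) \<le> Lp * (norm (?V - Ubar) + norm (?W - 0) + \<bar>\<epsilon> * y - 0\<bar> + \<bar>\<epsilon> - 0\<bar>) * norm ?W"
      by (rule lip\<Upsilon>[OF ib box0])
    also have "\<dots> \<le> Lp * (3 * \<delta>) * norm ?W"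
      using ds Lp1 by (intro mult_right_mono mult_left_mono) auto
    finally show ?thesis .
  qed
  have n3: "norm ((\<epsilon> * y) *\<^sub>R ((\<Upsilon> ?V ?W (\<epsilon> * y) \<epsilon> - \<Upsilon> Ubar 0 0 0) *v ?W)) \<le> 1 * (Lp * (3 * \<delta>) * norm ?W)"
    using mult_mono[OF _ n2, of "\<bar>\<epsilon> * y\<bar>" 1] ey \<delta>_le_one by simp
  have "norm (g2 x y) \<le> Lp * (3 * \<delta>) * norm ?W + 1 * (Lp * (3 * \<delta>) * norm ?W)"
    unfolding eq by (rule order_trans[OF norm_triangle_ineq4 add_mono[OF n1 n3]])
  then show ?thesis by simp
qed

lemma h1_bound:
  assumes x: "x \<in> S" and y: "y \<in> {0..L}"
  shows "norm (h1 x y) \<le> M * norm (Wx x y)"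
  unfolding h1_def by (rule bnd\<Psi>[OF inS_box[OF x y]])

lemma Ez_bound:
  assumes "0 \<le> y" "y \<le> z"
  shows "norm (Ez z y *v v) \<le> exp (- c * (z - y)) * norm v"
  unfolding Ez_def diag_mult_vec
proof (rule norm_dmul_le)
  fix i
  have "(z - y) * d i \<le> (z - y) * (- c)" using assms d_neg[of i] by (intro mult_left_mono) auto
  moreover have "\<epsilon> * y\<^sup>2 \<le> \<epsilon> * z\<^sup>2" using assms \<epsilon>_pos by (intro mult_left_mono power_mono) auto
  ultimately have "(z - y) * d i - \<epsilon> * z\<^sup>2 / 2 + \<epsilon> * y\<^sup>2 / 2 \<le> - c * (z - y)" by (simp add: algebra_simps)
  then show "\<bar>exp ((z - y) * d i - \<epsilon> * z\<^sup>2 / 2 + \<epsilon> * y\<^sup>2 / 2)\<bar> \<le> exp (- c * (z - y))" by simp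
qed

lemma E0_bound:
  assumes "0 \<le> z"
  shows "norm (E0 z *v v) \<le> exp (- c * z) * norm v"
  unfolding E0_def diag_mult_vec
proof (rule norm_dmul_le)
  fix i
  have "z * d i \<le> z * (- c)" using assms d_neg[of i] by (intro mult_left_mono) auto
  moreover have "0 \<le> \<epsilon> * z\<^sup>2" using \<epsilon>_pos by simp
  ultimately have "z * d i - \<epsilon> * z\<^sup>2 / 2 \<le> - c * z" by (simp add: algebra_simps)
  then show "\<bar>exp (z * d i - \<epsilon> * z\<^sup>2 / 2)\<bar> \<le> exp (- c * z)" by simp
qed

lemma cont_E0: "continuous_on A E0"
  unfolding E0_def diag_mat_def by (intro continuous_intros) auto

lemma cont_Ey: "continuous_on A Ey"
  unfolding Ey_def diag_mat_def by (intro continuous_intros) auto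

lemma Ez_split: "Ez z y = E0 z ** Ey y"
  unfolding Ez_def E0_def Ey_def diag_mult_diag
  by (rule arg_cong[where f=diag_mat], rule ext) (simp add: exp_add[symmetric] algebra_simps)

lemma cont_T1:
  assumes x: "x \<in> S"
  shows "continuous_on {0..L} (T1 x)"
  unfolding T1_def
  by (intro continuous_intros indefinite_integral_continuous_1' integrable_continuous_interval cont_h1 x)

lemma T2_alt:
  assumes x: "x \<in> S" and z: "z \<in> {0..L}"
  shows "T2 x z = E0 z *v (Wbar + integral {0..z} (\<lambda>y. Ey y *v g2 x y))"
proof -
  have ci: "continuous_on {0..z} (\<lambda>y. Ey y *v g2 x y)"
    by (intro cont_mv cont_Ey continuous_on_subset[OF cont_g2[OF x]]) (use z in auto)
  have "integral {0..z} (\<lambda>y. Ez z y *v g2 x y) = integral {0..z} ((*v) (E0 z) \<circ> (\<lambda>y. Ey y *v g2 x y))"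
    by (simp add: Ez_split matrix_vector_mul_assoc o_def)
  also have "\<dots> = E0 z *v integral {0..z} (\<lambda>y. Ey y *v g2 x y)"
    by (rule integral_linear[OF integrable_continuous_interval[OF ci]]) simp
  finally show ?thesis unfolding T2_def by (simp add: matrix_vector_right_distrib)
qed

lemma cont_T2:
  assumes x: "x \<in> S"
  shows "continuous_on {0..L} (T2 x)"
proof -
  have ci: "continuous_on {0..L} (\<lambda>y. Ey y *v g2 x y)"
    by (intro cont_mv cont_Ey cont_g2[OF x])
  have "continuous_on {0..L} (\<lambda>z. E0 z *v (Wbar + integral {0..z} (\<lambda>y. Ey y *v g2 x y)))"
    by (intro cont_mv cont_E0 continuous_on_add continuous_on_const indefinite_integral_continuous_1 integrable_continuous_interval ci)
  then show ?thesis by (rule continuous_on_eq) (simp add: T2_alt[OF x])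
qed

end


lemma cont_apply_bcontfun_at[continuous_intros]:
  "continuous_on S g \<Longrightarrow> continuous_on S (\<lambda>x. apply_bcontfun (g x) t)"
  by (rule continuous_on_compose2[of UNIV "\<lambda>f. apply_bcontfun f t"])
     (auto intro: continuous_at_imp_continuous_on isCont_apply_bcontfun)

context fp begin

definition "Am x y = ((\<Lambda> (Vx x y) (Wx x y) (\<epsilon> * y) \<epsilon> - diag_mat d)
    - (\<epsilon> * y) *\<^sub>R (\<Upsilon> (Vx x y) (Wx x y) (\<epsilon> * y) \<epsilon> - mat 1))"

lemma g2_Am: "g2 x y = Am x y *v Wx x y"
  by (simp add: g2_def Am_def)

lemma ey_bound: "y \<in> {0..L} \<Longrightarrow> \<bar>\<epsilon> * y\<bar> \<le> \<delta>"
proof -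
  assume y: "y \<in> {0..L}"
  have "\<epsilon> * y \<le> \<epsilon> * L" using y \<epsilon>_pos by (intro mult_left_mono) auto
  then show ?thesis using y \<epsilon>_pos eps_L by auto
qed

lemma Am_bound:
  assumes x: "x \<in> S" and y: "y \<in> {0..L}"
  shows "norm (Am x y *v w) \<le> 6 * Lp * \<delta> * norm w"
proof -
  let ?V = "Vx x y" and ?W = "Wx x y"
  have ib: "inbox Ubar \<delta>\<^sub>1 ?V ?W (\<epsilon> * y) \<epsilon>" by (rule inS_box[OF x y])
  have ds: "norm (?V - Ubar) + norm (?W - 0) + \<bar>\<epsilon> * y - 0\<bar> + \<bar>\<epsilon> - 0\<bar> \<le> 3 * \<delta>" by (rule dist0[OF x y])
  have ey: "\<bar>\<epsilon> * y\<bar> \<le> \<delta>" by (rule ey_bound[OF y])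
  have eq: "Am x y *v w = (\<Lambda> ?V ?W (\<epsilon> * y) \<epsilon> - \<Lambda> Ubar 0 0 0) *v w - (\<epsilon> * y) *\<^sub>R ((\<Upsilon> ?V ?W (\<epsilon> * y) \<epsilon> - \<Upsilon> Ubar 0 0 0) *v w)"
    unfolding Am_def \<Lambda>0 \<Upsilon>0 by (simp add: matrix_vector_mult_diff_rdistrib scaleR_matrix_vector_assoc[symmetric])
  have n1: "norm ((\<Lambda> ?V ?W (\<epsilon> * y) \<epsilon> - \<Lambda> Ubar 0 0 0) *v w) \<le> Lp * (3 * \<delta>) * norm w"
  proof -
    have "norm ((\<Lambda> ?V ?W (\<epsilon> * y) \<epsilon> - \<Lambda> Ubar 0 0 0) *v w) \<le> Lp * (norm (?V - Ubar) + norm (?W - 0) + \<bar>\<epsilon> * y - 0\<bar> + \<bar>\<epsilon> - 0\<bar>) * norm w"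
      by (rule lip\<Lambda>[OF ib box0])
    also have "\<dots> \<le> Lp * (3 * \<delta>) * norm w"
      using ds Lp1 by (intro mult_right_mono mult_left_mono) auto
    finally show ?thesis .
  qed
  have n2: "norm ((\<Upsilon> ?V ?W (\<epsilon> * y) \<epsilon> - \<Upsilon> Ubar 0 0 0) *v w) \<le> Lp * (3 * \<delta>) * norm w"
  proof -
    have "norm ((\<Upsilon> ?V ?W (\<epsilon> * y) \<epsilon> - \<Upsilon> Ubar 0 0 0) *v w) \<le> Lp * (norm (?V - Ubar) + norm (?W - 0) + \<bar>\<epsilon> * y - 0\<bar> + \<bar>\<epsilon> - 0\<bar>) * norm w"
      by (rule lip\<Upsilon>[OF ib box0])
    also have "\<dots> \<le> Lp * (3 * \<delta>) * norm w"
      using ds Lp1 by (intro mult_right_mono mult_left_mono) auto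
    finally show ?thesis .
  qed
  have n3: "norm ((\<epsilon> * y) *\<^sub>R ((\<Upsilon> ?V ?W (\<epsilon> * y) \<epsilon> - \<Upsilon> Ubar 0 0 0) *v w)) \<le> 1 * (Lp * (3 * \<delta>) * norm w)"
    using mult_mono[OF _ n2, of "\<bar>\<epsilon> * y\<bar>" 1] ey \<delta>_le_one by simp
  have "norm (Am x y *v w) \<le> Lp * (3 * \<delta>) * norm w + 1 * (Lp * (3 * \<delta>) * norm w)"
    unfolding eq by (rule order_trans[OF norm_triangle_ineq4 add_mono[OF n1 n3]])
  then show ?thesis by simp
qed

lemma cont_Ez: "continuous_on A (\<lambda>y. Ez z y)"
  unfolding Ez_def diag_mat_def by (intro continuous_intros) auto

lemma exp_split: "exp (- c * (z - y)) * exp (- c * y / 2) = exp (- c * z / 2) * exp (- c * (z - y) / 2)"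
  by (simp add: exp_add[symmetric] algebra_simps)

lemma T1_bound:
  assumes x: "x \<in> S" and z: "z \<in> {0..L}"
  shows "norm (T1 x z - Ubar) \<le> \<delta> / 2"
proof -
  have "norm (integral {z..L} (h1 x)) \<le> (M * cW * \<delta>) * (2 / c)"
  proof (rule int_bound1[OF c_pos])
    show "continuous_on {z..L} (h1 x)" using z by (intro continuous_on_subset[OF cont_h1[OF x]]) auto
    show "0 \<le> M * cW * \<delta>" using M_pos cW_pos \<delta>_pos by simp
    fix y assume y: "y \<in> {z..L}"
    then have y': "y \<in> {0..L}" using z by auto
    have "norm (h1 x y) \<le> M * norm (Wx x y)" by (rule h1_bound[OF x y'])
    also have "\<dots> \<le> M * (cW * \<delta> * exp (- c * y / 2))"
      using Wx_bound[OF x y'] M_pos by (intro mult_left_mono) auto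
    finally show "norm (h1 x y) \<le> M * cW * \<delta> * exp (- c * y / 2)" by simp
  qed (use z in auto)
  also have "\<dots> = \<delta> * (M * cW * (2 / c))" by simp
  also have "\<dots> \<le> \<delta> * (1/4)" using cW_M \<delta>_pos by (intro mult_left_mono) auto
  finally have i: "norm (integral {z..L} (h1 x)) \<le> \<delta> / 4" by simp
  have "T1 x z - Ubar = (U0 - Ubar) - integral {z..L} (h1 x)" by (simp add: T1_def)
  then have "norm (T1 x z - Ubar) \<le> norm (U0 - Ubar) + norm (integral {z..L} (h1 x))"
    by (metis norm_triangle_ineq4)
  then show ?thesis using i U0 by simp
qed

lemma T2_bound:
  assumes x: "x \<in> S" and z: "z \<in> {0..L}"
  shows "norm (T2 x z) \<le> cW * \<delta> * exp (- c * z / 2)"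
proof -
  let ?K = "6 * Lp * \<delta> * (cW * \<delta>) * exp (- c * z / 2)"
  have K0: "0 \<le> ?K" using Lp1 \<delta>_pos cW_pos by simp
  have "norm (integral {0..z} (\<lambda>y. Ez z y *v g2 x y)) \<le> ?K * (2 / c)"
  proof (rule int_bound2[OF c_pos _ K0])
    show "continuous_on {0..z} (\<lambda>y. Ez z y *v g2 x y)"
      using z by (intro cont_mv cont_Ez continuous_on_subset[OF cont_g2[OF x]]) auto
    fix y assume y: "y \<in> {0..z}"
    then have y': "y \<in> {0..L}" using z by auto
    have "norm (Ez z y *v g2 x y) \<le> exp (- c * (z - y)) * norm (g2 x y)"
      using y by (intro Ez_bound) auto
    also have "\<dots> \<le> exp (- c * (z - y)) * (6 * Lp * \<delta> * (cW * \<delta> * exp (- c * y / 2)))"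
    proof (intro mult_left_mono)
      have "norm (g2 x y) \<le> 6 * Lp * \<delta> * norm (Wx x y)" by (rule g2_bound[OF x y'])
      also have "\<dots> \<le> 6 * Lp * \<delta> * (cW * \<delta> * exp (- c * y / 2))"
        using Wx_bound[OF x y'] Lp1 \<delta>_pos by (intro mult_left_mono) auto
      finally show "norm (g2 x y) \<le> 6 * Lp * \<delta> * (cW * \<delta> * exp (- c * y / 2))" .
    qed simp
    also have "\<dots> = 6 * Lp * \<delta> * (cW * \<delta>) * (exp (- c * (z - y)) * exp (- c * y / 2))"
      by (simp add: algebra_simps)
    also have "\<dots> = ?K * exp (- c * (z - y) / 2)"
      by (subst exp_split) (simp only: mult_ac)
    finally show "norm (Ez z y *v g2 x y) \<le> ?K * exp (- c * (z - y) / 2)" .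
  qed (use z in auto)
  also have "\<dots> = (Lp * \<delta> * 12 / c) * (cW * \<delta> * exp (- c * z / 2))" by (simp add: algebra_simps)
  also have "\<dots> \<le> (1/2) * (cW * \<delta> * exp (- c * z / 2))"
  proof (rule mult_right_mono)
    show "Lp * \<delta> * 12 / c \<le> 1/2" using Lp\<delta> c_pos by (simp add: field_simps)
    show "0 \<le> cW * \<delta> * exp (- c * z / 2)" using cW_pos \<delta>_pos by simp
  qed
  finally have i: "norm (integral {0..z} (\<lambda>y. Ez z y *v g2 x y)) \<le> (1/2) * (cW * \<delta> * exp (- c * z / 2))" .
  have "norm (E0 z *v Wbar) \<le> exp (- c * z) * norm Wbar" using z by (intro E0_bound) auto
  also have "\<dots> \<le> exp (- c * z / 2) * (\<theta> * \<delta>)"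
    using Wbar z c_pos by (intro mult_mono) auto
  finally have e: "norm (E0 z *v Wbar) \<le> (1/2) * (cW * \<delta> * exp (- c * z / 2))" by (simp add: \<theta>_def mult_ac)
  have "norm (T2 x z) \<le> norm (E0 z *v Wbar) + norm (integral {0..z} (\<lambda>y. Ez z y *v g2 x y))"
    unfolding T2_def by (rule norm_triangle_ineq)
  then show ?thesis using e i by simp
qed

end


context fp begin

definition ext :: "(real \<Rightarrow> 'b::metric_space) \<Rightarrow> real \<Rightarrow>\<^sub>C 'b" where
  "ext F = Bcontfun (\<lambda>t. F (clamp 0 L t))"

lemma ext_apply': "continuous_on {0..L} F \<Longrightarrow> apply_bcontfun (ext F) t = F (clamp 0 L t)"
  unfolding ext_def by (simp add: ext_apply)

lemma clampL: "clamp 0 L t \<in> {0..L}"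
  using clamp_real[of 0 L t] L_pos by simp

lemma ext_at: "continuous_on {0..L} F \<Longrightarrow> t \<in> {0..L} \<Longrightarrow> apply_bcontfun (ext F) t = F t"
  by (simp add: ext_apply' clamp_real_cancel)

definition T :: "(real \<Rightarrow>\<^sub>C (real^'n)) \<times> (real \<Rightarrow>\<^sub>C (real^'k)) \<Rightarrow> (real \<Rightarrow>\<^sub>C (real^'n)) \<times> (real \<Rightarrow>\<^sub>C (real^'k))" where
  "T x = (ext (T1 x), ext (\<lambda>z. (1 / om z) *\<^sub>R T2 x z))"

lemma cont_sT2: "x \<in> S \<Longrightarrow> continuous_on {0..L} (\<lambda>z. (1 / om z) *\<^sub>R T2 x z)"
  unfolding om_def by (intro continuous_intros cont_T2) (use lam_ge in auto)

lemma inv_om: "(1 / om z) * (cW * \<delta> * exp (- c * z / 2)) = lam * cW * \<delta>"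
  using lam_ge by (simp add: om_def field_simps)

lemma T_in_S:
  assumes x: "x \<in> S"
  shows "T x \<in> S"
  unfolding S_def
proof (intro CollectI ballI conjI)
  fix t assume t: "t \<in> {0..L}"
  have "Vx (T x) t = T1 x t" unfolding Vx_def T_def by (simp add: ext_at[OF cont_T1[OF x] t])
  then show "norm (Vx (T x) t - Ubar) \<le> \<delta> / 2" using T1_bound[OF x t] by simp
  have "apply_bcontfun (snd (T x)) t = (1 / om t) *\<^sub>R T2 x t"
    unfolding T_def by (simp add: ext_at[OF cont_sT2[OF x] t])
  then have "norm (apply_bcontfun (snd (T x)) t) = (1 / om t) * norm (T2 x t)"
    using om_pos[of t] by simp
  also have "\<dots> \<le> (1 / om t) * (cW * \<delta> * exp (- c * t / 2))"
    using T2_bound[OF x t] om_pos[of t] by (intro mult_left_mono) auto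
  also have "\<dots> = lam * cW * \<delta>" by (rule inv_om)
  finally show "norm (apply_bcontfun (snd (T x)) t) \<le> lam * cW * \<delta>" .
qed

lemma closed_S: "closed S"
proof -
  have "S = (\<Inter>t\<in>{0..L}. {x. norm (apply_bcontfun (fst x) t - Ubar) \<le> \<delta> / 2} \<inter>
                          {x. norm (apply_bcontfun (snd x) t) \<le> lam * cW * \<delta>})"
    by (auto simp: S_def Vx_def)
  also have "closed \<dots>"
    by (intro closed_INT ballI closed_Int closed_Collect_le continuous_intros)
  finally show ?thesis .
qed

lemma S_ne: "S \<noteq> {}"
proof -
  have "(const_bcontfun Ubar, const_bcontfun 0) \<in> S"
    using \<delta>_pos lam_ge cW_pos by (simp add: S_def Vx_def const_bcontfun.rep_eq)
  then show ?thesis by blast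
qed

lemma dV_le: "norm (Vx x1 y - Vx x2 y) \<le> dist x1 x2"
proof -
  have "dist (apply_bcontfun (fst x1) y) (apply_bcontfun (fst x2) y) \<le> dist (fst x1) (fst x2)"
    by (rule dist_bounded)
  also have "\<dots> \<le> dist x1 x2" by (rule dist_fst_le)
  finally show ?thesis by (simp add: Vx_def dist_norm)
qed

lemma dW_le: "norm (Wx x1 y - Wx x2 y) \<le> om y * dist x1 x2"
proof -
  have "dist (apply_bcontfun (snd x1) y) (apply_bcontfun (snd x2) y) \<le> dist (snd x1) (snd x2)"
    by (rule dist_bounded)
  also have "\<dots> \<le> dist x1 x2" by (rule dist_snd_le)
  finally have a: "norm (apply_bcontfun (snd x1) y - apply_bcontfun (snd x2) y) \<le> dist x1 x2"
    by (simp add: dist_norm)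
  have "Wx x1 y - Wx x2 y = om y *\<^sub>R (apply_bcontfun (snd x1) y - apply_bcontfun (snd x2) y)"
    by (simp add: Wx_def scaleR_diff_right)
  then have "norm (Wx x1 y - Wx x2 y) = om y * norm (apply_bcontfun (snd x1) y - apply_bcontfun (snd x2) y)"
    using om_pos[of y] by simp
  also have "\<dots> \<le> om y * dist x1 x2" using a om_pos[of y] by (intro mult_left_mono) auto
  finally show ?thesis .
qed

lemma om_le: "om y \<le> exp (- c * y / 2)"
  using lam_ge by (simp add: om_def divide_le_eq)

lemma exp_le_lam: "y \<in> {0..L} \<Longrightarrow> exp (- c * y / 2) \<le> lam"
proof -
  assume y: "y \<in> {0..L}"
  have "exp (- c * y / 2) \<le> 1" using c_pos y by simp
  then show ?thesis using lam_ge by linarith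
qed

lemma h1_diff:
  assumes x1: "x1 \<in> S" and x2: "x2 \<in> S" and y: "y \<in> {0..L}"
  shows "norm (h1 x1 y - h1 x2 y) \<le> ((2 * Lp * \<delta> + M / lam) * dist x1 x2) * exp (- c * y / 2)"
proof -
  let ?N = "dist x1 x2" and ?e = "exp (- c * y / 2)"
  let ?P1 = "\<Psi> (Vx x1 y) (Wx x1 y) (\<epsilon> * y) \<epsilon>" and ?P2 = "\<Psi> (Vx x2 y) (Wx x2 y) (\<epsilon> * y) \<epsilon>"
  have eq: "h1 x1 y - h1 x2 y = (?P1 - ?P2) *v Wx x1 y + ?P2 *v (Wx x1 y - Wx x2 y)"
    by (simp add: h1_def matrix_vector_mult_diff_rdistrib matrix_vector_mult_diff_distrib)
  have dW: "norm (Wx x1 y - Wx x2 y) \<le> ?e / lam * ?N"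
    using dW_le[of x1 y x2] by (simp add: om_def)
  have dW': "norm (Wx x1 y - Wx x2 y) \<le> ?N"
  proof -
    have "?e / lam * ?N \<le> 1 * ?N"
      using lam_ge c_pos exp_le_lam[OF y] by (intro mult_right_mono) (auto simp: divide_le_eq)
    then show ?thesis using dW by simp
  qed
  have W1: "norm (Wx x1 y) \<le> \<delta> * ?e"
  proof -
    have "cW * \<delta> * ?e \<le> 1 * \<delta> * ?e" using cW_le \<delta>_pos by (intro mult_right_mono) auto
    then show ?thesis using Wx_bound[OF x1 y] by simp
  qed
  have n1: "norm ((?P1 - ?P2) *v Wx x1 y) \<le> Lp * (2 * ?N) * (\<delta> * ?e)"
  proof -
    have "norm ((?P1 - ?P2) *v Wx x1 y) \<le> Lp * (norm (Vx x1 y - Vx x2 y) + norm (Wx x1 y - Wx x2 y) + \<bar>\<epsilon> * y - \<epsilon> * y\<bar> + \<bar>\<epsilon> - \<epsilon>\<bar>) * norm (Wx x1 y)"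
      by (rule lip\<Psi>[OF inS_box[OF x1 y] inS_box[OF x2 y]])
    also have "\<dots> \<le> Lp * (2 * ?N) * (\<delta> * ?e)"
      using dV_le[of x1 y x2] dW' W1 Lp1 by (intro mult_mono mult_left_mono) auto
    finally show ?thesis .
  qed
  have n2: "norm (?P2 *v (Wx x1 y - Wx x2 y)) \<le> M * (?e / lam * ?N)"
    using bnd\<Psi>[OF inS_box[OF x2 y], of "Wx x1 y - Wx x2 y"] dW M_pos
    by (meson mult_left_mono less_imp_le order_trans)
  have "norm (h1 x1 y - h1 x2 y) \<le> Lp * (2 * ?N) * (\<delta> * ?e) + M * (?e / lam * ?N)"
    unfolding eq by (rule order_trans[OF norm_triangle_ineq add_mono[OF n1 n2]])
  also have "\<dots> = ((2 * Lp * \<delta> + M / lam) * ?N) * ?e" by (simp add: algebra_simps)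
  finally show ?thesis .
qed

lemma g2_diff:
  assumes x1: "x1 \<in> S" and x2: "x2 \<in> S" and y: "y \<in> {0..L}"
  shows "norm (g2 x1 y - g2 x2 y) \<le> (10 * Lp * \<delta> * dist x1 x2) * exp (- c * y / 2)"
proof -
  let ?N = "dist x1 x2" and ?e = "exp (- c * y / 2)"
  let ?L1 = "\<Lambda> (Vx x1 y) (Wx x1 y) (\<epsilon> * y) \<epsilon>" and ?L2 = "\<Lambda> (Vx x2 y) (Wx x2 y) (\<epsilon> * y) \<epsilon>"
  let ?U1 = "\<Upsilon> (Vx x1 y) (Wx x1 y) (\<epsilon> * y) \<epsilon>" and ?U2 = "\<Upsilon> (Vx x2 y) (Wx x2 y) (\<epsilon> * y) \<epsilon>"
  have Ad: "Am x1 y - Am x2 y = (?L1 - ?L2) - (\<epsilon> * y) *\<^sub>R (?U1 - ?U2)"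
    by (simp add: Am_def algebra_simps)
  have eq: "g2 x1 y - g2 x2 y = ((?L1 - ?L2) *v Wx x1 y - (\<epsilon> * y) *\<^sub>R ((?U1 - ?U2) *v Wx x1 y)) + Am x2 y *v (Wx x1 y - Wx x2 y)"
  proof -
    have "g2 x1 y - g2 x2 y = (Am x1 y - Am x2 y) *v Wx x1 y + Am x2 y *v (Wx x1 y - Wx x2 y)"
      by (simp add: g2_Am matrix_vector_mult_diff_rdistrib matrix_vector_mult_diff_distrib)
    also have "(Am x1 y - Am x2 y) *v Wx x1 y = (?L1 - ?L2) *v Wx x1 y - (\<epsilon> * y) *\<^sub>R ((?U1 - ?U2) *v Wx x1 y)"
      unfolding Ad by (simp add: matrix_vector_mult_diff_rdistrib scaleR_matrix_vector_assoc[symmetric] del: scaleR_diff_right)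
    finally show ?thesis .
  qed
  have dW: "norm (Wx x1 y - Wx x2 y) \<le> ?e / lam * ?N"
    using dW_le[of x1 y x2] by (simp add: om_def)
  have dW': "norm (Wx x1 y - Wx x2 y) \<le> ?N"
  proof -
    have "?e / lam * ?N \<le> 1 * ?N"
      using lam_ge c_pos exp_le_lam[OF y] by (intro mult_right_mono) (auto simp: divide_le_eq)
    then show ?thesis using dW by simp
  qed
  have dW'': "norm (Wx x1 y - Wx x2 y) \<le> ?e * ?N"
  proof -
    have "?e / lam * ?N \<le> ?e * ?N"
      using lam_ge c_pos exp_le_lam[OF y] by (intro mult_right_mono) (auto simp: divide_le_eq)
    then show ?thesis using dW by simp
  qed
  have W1: "norm (Wx x1 y) \<le> \<delta> * ?e"
  proof -
    have "cW * \<delta> * ?e \<le> 1 * \<delta> * ?e" using cW_le \<delta>_pos by (intro mult_right_mono) auto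
    then show ?thesis using Wx_bound[OF x1 y] by simp
  qed
  have ds: "norm (Vx x1 y - Vx x2 y) + norm (Wx x1 y - Wx x2 y) + \<bar>\<epsilon> * y - \<epsilon> * y\<bar> + \<bar>\<epsilon> - \<epsilon>\<bar> \<le> 2 * ?N"
    using dV_le[of x1 y x2] dW' by simp
  have n1: "norm ((?L1 - ?L2) *v Wx x1 y) \<le> Lp * (2 * ?N) * (\<delta> * ?e)"
  proof -
    have "norm ((?L1 - ?L2) *v Wx x1 y) \<le> Lp * (norm (Vx x1 y - Vx x2 y) + norm (Wx x1 y - Wx x2 y) + \<bar>\<epsilon> * y - \<epsilon> * y\<bar> + \<bar>\<epsilon> - \<epsilon>\<bar>) * norm (Wx x1 y)"
      by (rule lip\<Lambda>[OF inS_box[OF x1 y] inS_box[OF x2 y]])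
    also have "\<dots> \<le> Lp * (2 * ?N) * (\<delta> * ?e)"
      using ds W1 Lp1 by (intro mult_mono mult_left_mono) auto
    finally show ?thesis .
  qed
  have n2: "norm ((?U1 - ?U2) *v Wx x1 y) \<le> Lp * (2 * ?N) * (\<delta> * ?e)"
  proof -
    have "norm ((?U1 - ?U2) *v Wx x1 y) \<le> Lp * (norm (Vx x1 y - Vx x2 y) + norm (Wx x1 y - Wx x2 y) + \<bar>\<epsilon> * y - \<epsilon> * y\<bar> + \<bar>\<epsilon> - \<epsilon>\<bar>) * norm (Wx x1 y)"
      by (rule lip\<Upsilon>[OF inS_box[OF x1 y] inS_box[OF x2 y]])
    also have "\<dots> \<le> Lp * (2 * ?N) * (\<delta> * ?e)"
      using ds W1 Lp1 by (intro mult_mono mult_left_mono) auto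
    finally show ?thesis .
  qed
  have n3: "norm ((\<epsilon> * y) *\<^sub>R ((?U1 - ?U2) *v Wx x1 y)) \<le> 1 * (Lp * (2 * ?N) * (\<delta> * ?e))"
    using mult_mono[OF _ n2, of "\<bar>\<epsilon> * y\<bar>" 1] ey_bound[OF y] \<delta>_le_one by simp
  have n4: "norm (Am x2 y *v (Wx x1 y - Wx x2 y)) \<le> 6 * Lp * \<delta> * (?e * ?N)"
  proof -
    have "norm (Am x2 y *v (Wx x1 y - Wx x2 y)) \<le> 6 * Lp * \<delta> * norm (Wx x1 y - Wx x2 y)"
      by (rule Am_bound[OF x2 y])
    also have "\<dots> \<le> 6 * Lp * \<delta> * (?e * ?N)"
      using dW'' Lp1 \<delta>_pos by (intro mult_left_mono) auto
    finally show ?thesis .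
  qed
  have "norm (g2 x1 y - g2 x2 y) \<le> (Lp * (2 * ?N) * (\<delta> * ?e) + 1 * (Lp * (2 * ?N) * (\<delta> * ?e))) + 6 * Lp * \<delta> * (?e * ?N)"
    unfolding eq
    by (rule order_trans[OF norm_triangle_ineq add_mono[OF order_trans[OF norm_triangle_ineq4 add_mono[OF n1 n3]] n4]])
  also have "\<dots> = (10 * Lp * \<delta> * ?N) * ?e" by (simp add: algebra_simps)
  finally show ?thesis .
qed


lemma T1_diff:
  assumes x1: "x1 \<in> S" and x2: "x2 \<in> S" and z: "z \<in> {0..L}"
  shows "norm (T1 x1 z - T1 x2 z) \<le> (4 * Lp * \<delta> / c + 1/4) * dist x1 x2"
proof -
  let ?N = "dist x1 x2"
  have i1: "h1 x1 integrable_on {z..L}" and i2: "h1 x2 integrable_on {z..L}"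
    using z by (auto intro!: integrable_continuous_interval continuous_on_subset[OF cont_h1[OF x1]] continuous_on_subset[OF cont_h1[OF x2]])
  have "T1 x1 z - T1 x2 z = - integral {z..L} (\<lambda>y. h1 x1 y - h1 x2 y)"
    by (simp add: T1_def integral_diff[OF i1 i2])
  then have "norm (T1 x1 z - T1 x2 z) = norm (integral {z..L} (\<lambda>y. h1 x1 y - h1 x2 y))" by simp
  also have "\<dots> \<le> ((2 * Lp * \<delta> + M / lam) * ?N) * (2 / c)"
  proof (rule int_bound1[OF c_pos])
    show "continuous_on {z..L} (\<lambda>y. h1 x1 y - h1 x2 y)"
      using z by (intro continuous_on_diff continuous_on_subset[OF cont_h1[OF x1]] continuous_on_subset[OF cont_h1[OF x2]]) auto
    show "0 \<le> (2 * Lp * \<delta> + M / lam) * ?N" using Lp1 \<delta>_pos M_pos lam_ge by simp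
    fix y assume "y \<in> {z..L}"
    then have y: "y \<in> {0..L}" using z by auto
    show "norm (h1 x1 y - h1 x2 y) \<le> (2 * Lp * \<delta> + M / lam) * ?N * exp (- c * y / 2)"
      by (rule h1_diff[OF x1 x2 y])
  qed (use z in auto)
  also have "\<dots> = (4 * Lp * \<delta> / c) * ?N + (M / lam * (2 / c)) * ?N" by (simp add: algebra_simps)
  also have "\<dots> = (4 * Lp * \<delta> / c + 1/4) * ?N" by (subst lam_M) (simp add: algebra_simps)
  finally show ?thesis .
qed

lemma T2_diff:
  assumes x1: "x1 \<in> S" and x2: "x2 \<in> S" and z: "z \<in> {0..L}"
  shows "norm (T2 x1 z - T2 x2 z) \<le> (20 * Lp * \<delta> / c * dist x1 x2) * exp (- c * z / 2)"
proof -
  let ?N = "dist x1 x2"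
  have c1: "continuous_on {0..z} (\<lambda>y. Ez z y *v g2 x1 y)" and c2: "continuous_on {0..z} (\<lambda>y. Ez z y *v g2 x2 y)"
    using z by (auto intro!: cont_mv cont_Ez continuous_on_subset[OF cont_g2[OF x1]] continuous_on_subset[OF cont_g2[OF x2]])
  have "T2 x1 z - T2 x2 z = integral {0..z} (\<lambda>y. Ez z y *v g2 x1 y - Ez z y *v g2 x2 y)"
    by (simp add: T2_def integral_diff[OF integrable_continuous_interval[OF c1] integrable_continuous_interval[OF c2]])
  also have "\<dots> = integral {0..z} (\<lambda>y. Ez z y *v (g2 x1 y - g2 x2 y))"
    by (simp add: matrix_vector_mult_diff_distrib)
  finally have eq: "T2 x1 z - T2 x2 z = integral {0..z} (\<lambda>y. Ez z y *v (g2 x1 y - g2 x2 y))" .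
  let ?K = "10 * Lp * \<delta> * ?N * exp (- c * z / 2)"
  have "norm (integral {0..z} (\<lambda>y. Ez z y *v (g2 x1 y - g2 x2 y))) \<le> ?K * (2 / c)"
  proof (rule int_bound2[OF c_pos])
    show "continuous_on {0..z} (\<lambda>y. Ez z y *v (g2 x1 y - g2 x2 y))"
      using z by (intro cont_mv cont_Ez continuous_on_diff continuous_on_subset[OF cont_g2[OF x1]] continuous_on_subset[OF cont_g2[OF x2]]) auto
    show "0 \<le> ?K" using Lp1 \<delta>_pos by simp
    fix y assume yz: "y \<in> {0..z}"
    then have y: "y \<in> {0..L}" using z by auto
    have "norm (Ez z y *v (g2 x1 y - g2 x2 y)) \<le> exp (- c * (z - y)) * norm (g2 x1 y - g2 x2 y)"
      using yz by (intro Ez_bound) auto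
    also have "\<dots> \<le> exp (- c * (z - y)) * ((10 * Lp * \<delta> * ?N) * exp (- c * y / 2))"
      by (intro mult_left_mono g2_diff[OF x1 x2 y]) simp
    also have "\<dots> = 10 * Lp * \<delta> * ?N * (exp (- c * (z - y)) * exp (- c * y / 2))"
      by (simp add: algebra_simps)
    also have "\<dots> = ?K * exp (- c * (z - y) / 2)"
      by (subst exp_split) (simp only: mult_ac)
    finally show "norm (Ez z y *v (g2 x1 y - g2 x2 y)) \<le> ?K * exp (- c * (z - y) / 2)" .
  qed (use z in auto)
  also have "\<dots> = (20 * Lp * \<delta> / c * ?N) * exp (- c * z / 2)" by (simp add: algebra_simps)
  finally show ?thesis using eq by simp
qed

lemma dist_ext_le:
  assumes "continuous_on {0..L} F" "continuous_on {0..L} G"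
    and "\<And>t. t \<in> {0..L} \<Longrightarrow> norm (F t - G t) \<le> B"
  shows "dist (ext F) (ext G) \<le> B"
proof (rule dist_bound)
  fix t
  show "dist (apply_bcontfun (ext F) t) (apply_bcontfun (ext G) t) \<le> B"
    using assms(3)[OF clampL[of t]] by (simp add: ext_apply'[OF assms(1)] ext_apply'[OF assms(2)] dist_norm)
qed

lemma contraction:
  assumes x1: "x1 \<in> S" and x2: "x2 \<in> S"
  shows "dist (T x1) (T x2) \<le> (1/2) * dist x1 x2"
proof -
  let ?N = "dist x1 x2"
  have d1: "dist (fst (T x1)) (fst (T x2)) \<le> (4 * Lp * \<delta> / c + 1/4) * ?N"
    unfolding T_def fst_conv
    by (rule dist_ext_le[OF cont_T1[OF x1] cont_T1[OF x2] T1_diff[OF x1 x2]])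
  have d2: "dist (snd (T x1)) (snd (T x2)) \<le> lam * (20 * Lp * \<delta> / c * ?N)"
    unfolding T_def snd_conv
  proof (rule dist_ext_le[OF cont_sT2[OF x1] cont_sT2[OF x2]])
    fix t assume t: "t \<in> {0..L}"
    have "norm ((1 / om t) *\<^sub>R T2 x1 t - (1 / om t) *\<^sub>R T2 x2 t) = (1 / om t) * norm (T2 x1 t - T2 x2 t)"
      using om_pos[of t] by (simp add: scaleR_diff_right[symmetric])
    also have "\<dots> \<le> (1 / om t) * ((20 * Lp * \<delta> / c * ?N) * exp (- c * t / 2))"
      using om_pos[of t] T2_diff[OF x1 x2 t] by (intro mult_left_mono) auto
    also have "\<dots> = lam * (20 * Lp * \<delta> / c * ?N)"
      using lam_ge by (simp add: om_def field_simps)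
    finally show "norm ((1 / om t) *\<^sub>R T2 x1 t - (1 / om t) *\<^sub>R T2 x2 t) \<le> lam * (20 * Lp * \<delta> / c * ?N)" .
  qed
  have "dist (T x1) (T x2) \<le> dist (fst (T x1)) (fst (T x2)) + dist (snd (T x1)) (snd (T x2))"
  proof -
    have "dist (T x1) (T x2) = sqrt ((dist (fst (T x1)) (fst (T x2)))\<^sup>2 + (dist (snd (T x1)) (snd (T x2)))\<^sup>2)"
      by (metis dist_Pair_Pair prod.collapse)
    also have "\<dots> \<le> dist (fst (T x1)) (fst (T x2)) + dist (snd (T x1)) (snd (T x2))"
      by (rule sqrt_sum_squares_le_sum) simp_all
    finally show ?thesis .
  qed
  also have "\<dots> \<le> (4 * Lp * \<delta> / c + 1/4) * ?N + lam * (20 * Lp * \<delta> / c * ?N)"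
    using d1 d2 by simp
  also have "\<dots> = (1/4 + (Lp * \<delta> * (4 + 20 * lam)) / c) * ?N" by (simp add: algebra_simps add_divide_distrib)
  also have "\<dots> \<le> (1/4 + 1/4) * ?N"
  proof (rule mult_right_mono)
    have "Lp * \<delta> * 4 \<le> Lp * \<delta> * (4 * lam)" using lam_ge Lp1 \<delta>_pos by (intro mult_left_mono) auto
    then have "Lp * \<delta> * (4 + 20 * lam) \<le> 24 * (Lp * lam * \<delta>)" by (simp add: algebra_simps)
    also have "\<dots> \<le> c / 4"
    proof -
      have p: "0 \<le> Lp * (lam * \<delta>)" using Lp1 lam_ge \<delta>_pos by simp
      have "100 * (Lp * (lam * \<delta>)) \<le> c" using \<delta>_small by (simp add: mult.assoc)
      then show ?thesis using p by (simp add: mult.assoc)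
    qed
    finally have "(Lp * \<delta> * (4 + 20 * lam)) / c \<le> (c / 4) / c"
      using c_pos by (intro divide_right_mono) auto
    also have "(c / 4) / c = 1/4" using c_pos by simp
    finally show "1/4 + (Lp * \<delta> * (4 + 20 * lam)) / c \<le> 1/4 + 1/4" by linarith
  qed simp
  finally show ?thesis by simp
qed

lemma fixed_point: "\<exists>!x\<in>S. T x = x"
proof (rule Banach_fix[where c="1/2"])
  show "complete S" using closed_S by (simp add: complete_eq_closed)
qed (use S_ne T_in_S contraction in auto)


end


context fp begin

definition solP :: "(real \<Rightarrow> real^'n) \<Rightarrow> (real \<Rightarrow> real^'k) \<Rightarrow> bool" where
  "solP V W \<longleftrightarrow> continuous_on {0..L} V \<and> continuous_on {0..L} W \<and>
   (\<forall>\<zeta>\<in>{0..L}. V \<zeta> = U0 - integral {\<zeta>..L} (\<lambda>y. \<Psi> (V y) (W y) (\<epsilon> * y) \<epsilon> *v W y)) \<and>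
   (\<forall>\<zeta>\<in>{0..L}. W \<zeta> = mexp (\<zeta> *\<^sub>R \<Lambda> Ubar 0 0 0 - (\<epsilon> * \<zeta>\<^sup>2 / 2) *\<^sub>R mat 1) *v Wbar
       + integral {0..\<zeta>}
          (\<lambda>y. mexp ((\<zeta> - y) *\<^sub>R \<Lambda> Ubar 0 0 0 - (\<epsilon> * \<zeta>\<^sup>2 / 2) *\<^sub>R mat 1 + (\<epsilon> * y\<^sup>2 / 2) *\<^sub>R mat 1)
             *v (((\<Lambda> (V y) (W y) (\<epsilon> * y) \<epsilon> - \<Lambda> Ubar 0 0 0)
                  - (\<epsilon> * y) *\<^sub>R (\<Upsilon> (V y) (W y) (\<epsilon> * y) \<epsilon> - mat 1)) *v W y))) \<and>
   (\<forall>\<zeta>\<in>{0..L}. norm (V \<zeta> - Ubar) \<le> (1/2) * \<delta> \<and> norm (W \<zeta>) \<le> cW * exp (- c * \<zeta> / 2) * \<delta>)"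

lemma mexp_E0: "mexp (z *\<^sub>R \<Lambda> Ubar 0 0 0 - a *\<^sub>R mat 1) = diag_mat (\<lambda>i. exp (z * d i - a))"
proof -
  have "z *\<^sub>R \<Lambda> Ubar 0 0 0 - a *\<^sub>R mat 1 = diag_mat (\<lambda>i. z * d i - a)"
    by (simp add: \<Lambda>0 vec_eq_iff diag_mat_def mat_def)
  then show ?thesis by (simp add: mexp_diag)
qed

lemma mexp_E0': "mexp (z *\<^sub>R \<Lambda> Ubar 0 0 0 - (\<epsilon> * z\<^sup>2 / 2) *\<^sub>R mat 1) = E0 z"
  by (simp add: mexp_E0 E0_def)

lemma mexp_Ez: "mexp ((z - y) *\<^sub>R \<Lambda> Ubar 0 0 0 - (\<epsilon> * z\<^sup>2 / 2) *\<^sub>R mat 1 + (\<epsilon> * y\<^sup>2 / 2) *\<^sub>R mat 1) = Ez z y"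
proof -
  have "(z - y) *\<^sub>R \<Lambda> Ubar 0 0 0 - (\<epsilon> * z\<^sup>2 / 2) *\<^sub>R mat 1 + (\<epsilon> * y\<^sup>2 / 2) *\<^sub>R mat 1
      = diag_mat (\<lambda>i. (z - y) * d i - \<epsilon> * z\<^sup>2 / 2 + \<epsilon> * y\<^sup>2 / 2)"
    by (simp add: \<Lambda>0 vec_eq_iff diag_mat_def mat_def)
  then show ?thesis by (simp add: mexp_diag Ez_def)
qed

lemma sol_exists: "\<exists>V W. solP V W"
proof -
  obtain x where x: "x \<in> S" and fx: "T x = x" using fixed_point by blast
  define V where "V = Vx x"
  define W where "W = Wx x"
  have h1e: "h1 x = (\<lambda>y. \<Psi> (V y) (W y) (\<epsilon> * y) \<epsilon> *v W y)"
    by (simp add: h1_def V_def W_def fun_eq_iff)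
  have g2e: "g2 x y = ((\<Lambda> (V y) (W y) (\<epsilon> * y) \<epsilon> - \<Lambda> Ubar 0 0 0)
                  - (\<epsilon> * y) *\<^sub>R (\<Upsilon> (V y) (W y) (\<epsilon> * y) \<epsilon> - mat 1)) *v W y" for y
    by (simp add: g2_def V_def W_def \<Lambda>0)
  have Veq: "V \<zeta> = T1 x \<zeta>" if z: "\<zeta> \<in> {0..L}" for \<zeta>
  proof -
    have "V \<zeta> = apply_bcontfun (fst (T x)) \<zeta>" using fx by (simp add: V_def Vx_def)
    also have "\<dots> = T1 x \<zeta>" unfolding T_def by (simp add: ext_at[OF cont_T1[OF x] z])
    finally show ?thesis .
  qed
  have Weq: "W \<zeta> = T2 x \<zeta>" if z: "\<zeta> \<in> {0..L}" for \<zeta>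
  proof -
    have "W \<zeta> = om \<zeta> *\<^sub>R apply_bcontfun (snd (T x)) \<zeta>" using fx by (simp add: W_def Wx_def)
    also have "\<dots> = om \<zeta> *\<^sub>R ((1 / om \<zeta>) *\<^sub>R T2 x \<zeta>)" unfolding T_def by (simp add: ext_at[OF cont_sT2[OF x] z])
    also have "\<dots> = T2 x \<zeta>" using om_pos[of \<zeta>] by simp
    finally show ?thesis .
  qed
  have "solP V W"
    unfolding solP_def
  proof (intro conjI ballI)
    show "continuous_on {0..L} V" unfolding V_def by (rule cont_Vx)
    show "continuous_on {0..L} W" unfolding W_def by (rule cont_Wx)
    fix \<zeta> assume z: "\<zeta> \<in> {0..L}"
    show "V \<zeta> = U0 - integral {\<zeta>..L} (\<lambda>y. \<Psi> (V y) (W y) (\<epsilon> * y) \<epsilon> *v W y)"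
      using Veq[OF z] by (simp add: T1_def h1e)
    show "W \<zeta> = mexp (\<zeta> *\<^sub>R \<Lambda> Ubar 0 0 0 - (\<epsilon> * \<zeta>\<^sup>2 / 2) *\<^sub>R mat 1) *v Wbar
       + integral {0..\<zeta>}
          (\<lambda>y. mexp ((\<zeta> - y) *\<^sub>R \<Lambda> Ubar 0 0 0 - (\<epsilon> * \<zeta>\<^sup>2 / 2) *\<^sub>R mat 1 + (\<epsilon> * y\<^sup>2 / 2) *\<^sub>R mat 1)
             *v (((\<Lambda> (V y) (W y) (\<epsilon> * y) \<epsilon> - \<Lambda> Ubar 0 0 0)
                  - (\<epsilon> * y) *\<^sub>R (\<Upsilon> (V y) (W y) (\<epsilon> * y) \<epsilon> - mat 1)) *v W y))"
      unfolding mexp_E0' mexp_Ez g2e[symmetric] using Weq[OF z] by (simp add: T2_def)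
    show "norm (V \<zeta> - Ubar) \<le> (1/2) * \<delta>" using Vx_bound[OF x z] by (simp add: V_def)
    show "norm (W \<zeta>) \<le> cW * exp (- c * \<zeta> / 2) * \<delta>" using Wx_bound[OF x z] by (simp add: W_def mult_ac)
  qed
  then show ?thesis by blast
qed

lemma sol_fixed:
  assumes sol: "solP V W"
  defines "xs \<equiv> (ext V, ext (\<lambda>z. (1 / om z) *\<^sub>R W z))"
  shows "xs \<in> S \<and> T xs = xs \<and> (\<forall>t\<in>{0..L}. Vx xs t = V t \<and> Wx xs t = W t)"
proof -
  have cV: "continuous_on {0..L} V" and cW': "continuous_on {0..L} W" using sol by (auto simp: solP_def)
  have cW2: "continuous_on {0..L} (\<lambda>z. (1 / om z) *\<^sub>R W z)"
    unfolding om_def by (intro continuous_intros cW') (use lam_ge in auto)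
  have Vxs: "Vx xs t = V t" if "t \<in> {0..L}" for t
    unfolding xs_def Vx_def by (simp add: ext_at[OF cV that])
  have Wxs: "Wx xs t = W t" if "t \<in> {0..L}" for t
    unfolding xs_def Wx_def using om_pos[of t] by (simp add: ext_at[OF cW2 that])
  have inS: "xs \<in> S"
    unfolding S_def
  proof (intro CollectI ballI conjI)
    fix t assume t: "t \<in> {0..L}"
    have "norm (V t - Ubar) \<le> (1/2) * \<delta>" using sol t unfolding solP_def by blast
    then show "norm (Vx xs t - Ubar) \<le> \<delta> / 2" using Vxs[OF t] by simp
    have "apply_bcontfun (snd xs) t = (1 / om t) *\<^sub>R W t" unfolding xs_def by (simp add: ext_at[OF cW2 t])
    then have "norm (apply_bcontfun (snd xs) t) = (1 / om t) * norm (W t)" using om_pos[of t] by simp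
    also have "\<dots> \<le> (1 / om t) * (cW * \<delta> * exp (- c * t / 2))"
    proof (rule mult_left_mono)
      have "norm (W t) \<le> cW * exp (- c * t / 2) * \<delta>" using sol t unfolding solP_def by blast
      then show "norm (W t) \<le> cW * \<delta> * exp (- c * t / 2)" by (simp add: mult_ac)
    qed (use om_pos[of t] in simp)
    also have "\<dots> = lam * cW * \<delta>" by (rule inv_om)
    finally show "norm (apply_bcontfun (snd xs) t) \<le> lam * cW * \<delta>" .
  qed
  have T1e: "T1 xs z = V z" if z: "z \<in> {0..L}" for z
  proof -
    have "integral {z..L} (h1 xs) = integral {z..L} (\<lambda>y. \<Psi> (V y) (W y) (\<epsilon> * y) \<epsilon> *v W y)"
    proof (rule integral_cong)
      fix y assume "y \<in> {z..L}"
      then have y: "y \<in> {0..L}" using z by auto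
      show "h1 xs y = \<Psi> (V y) (W y) (\<epsilon> * y) \<epsilon> *v W y" by (simp add: h1_def Vxs[OF y] Wxs[OF y])
    qed
    then show ?thesis using sol z by (simp add: T1_def solP_def)
  qed
  have T2e: "T2 xs z = W z" if z: "z \<in> {0..L}" for z
  proof -
    have "integral {0..z} (\<lambda>y. Ez z y *v g2 xs y) = integral {0..z}
          (\<lambda>y. mexp ((z - y) *\<^sub>R \<Lambda> Ubar 0 0 0 - (\<epsilon> * z\<^sup>2 / 2) *\<^sub>R mat 1 + (\<epsilon> * y\<^sup>2 / 2) *\<^sub>R mat 1)
             *v (((\<Lambda> (V y) (W y) (\<epsilon> * y) \<epsilon> - \<Lambda> Ubar 0 0 0)
                  - (\<epsilon> * y) *\<^sub>R (\<Upsilon> (V y) (W y) (\<epsilon> * y) \<epsilon> - mat 1)) *v W y))"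
    proof (rule integral_cong)
      fix y assume "y \<in> {0..z}"
      then have y: "y \<in> {0..L}" using z by auto
      show "Ez z y *v g2 xs y = mexp ((z - y) *\<^sub>R \<Lambda> Ubar 0 0 0 - (\<epsilon> * z\<^sup>2 / 2) *\<^sub>R mat 1 + (\<epsilon> * y\<^sup>2 / 2) *\<^sub>R mat 1)
             *v (((\<Lambda> (V y) (W y) (\<epsilon> * y) \<epsilon> - \<Lambda> Ubar 0 0 0)
                  - (\<epsilon> * y) *\<^sub>R (\<Upsilon> (V y) (W y) (\<epsilon> * y) \<epsilon> - mat 1)) *v W y)"
        unfolding mexp_Ez by (simp add: g2_def Vxs[OF y] Wxs[OF y] \<Lambda>0)
    qed
    then show ?thesis using sol z by (simp add: T2_def solP_def mexp_E0')
  qed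
  have "T xs = xs"
  proof -
    have "ext (T1 xs) = ext V"
    proof (rule bcontfun_eqI)
      fix t
      show "apply_bcontfun (ext (T1 xs)) t = apply_bcontfun (ext V) t"
        by (simp add: ext_apply'[OF cont_T1[OF inS]] ext_apply'[OF cV] T1e[OF clampL])
    qed
    moreover have "ext (\<lambda>z. (1 / om z) *\<^sub>R T2 xs z) = ext (\<lambda>z. (1 / om z) *\<^sub>R W z)"
    proof (rule bcontfun_eqI)
      fix t
      show "apply_bcontfun (ext (\<lambda>z. (1 / om z) *\<^sub>R T2 xs z)) t = apply_bcontfun (ext (\<lambda>z. (1 / om z) *\<^sub>R W z)) t"
        by (simp add: ext_apply'[OF cont_sT2[OF inS]] ext_apply'[OF cW2] T2e[OF clampL])
    qed
    ultimately show ?thesis by (simp add: T_def xs_def)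
  qed
  then show ?thesis using inS Vxs Wxs by blast
qed

lemma sol_unique:
  assumes s1: "solP V1 W1" and s2: "solP V2 W2"
  shows "\<forall>\<zeta>\<in>{0..L}. V1 \<zeta> = V2 \<zeta> \<and> W1 \<zeta> = W2 \<zeta>"
proof -
  obtain x1 where x1: "x1 \<in> S" "T x1 = x1" "\<forall>t\<in>{0..L}. Vx x1 t = V1 t \<and> Wx x1 t = W1 t"
    using sol_fixed[OF s1] by blast
  obtain x2 where x2: "x2 \<in> S" "T x2 = x2" "\<forall>t\<in>{0..L}. Vx x2 t = V2 t \<and> Wx x2 t = W2 t"
    using sol_fixed[OF s2] by blast
  have "x1 = x2" using fixed_point x1 x2 by blast
  then show ?thesis using x1(3) x2(3) by auto
qed

lemma final_form:
  "(let \<Lambda>b = \<Lambda> Ubar 0 0 0;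
                L = \<delta> / \<epsilon>;
                sol = (\<lambda>(V :: real \<Rightarrow> real^'n) (W :: real \<Rightarrow> real^'k).
                  continuous_on {0..L} V \<and> continuous_on {0..L} W \<and>
                  (\<forall>\<zeta>\<in>{0..L}.
                     V \<zeta> = U0 - integral {\<zeta>..L}
                              (\<lambda>y. \<Psi> (V y) (W y) (\<epsilon> * y) \<epsilon> *v W y)) \<and>
                  (\<forall>\<zeta>\<in>{0..L}.
                     W \<zeta> = mexp (\<zeta> *\<^sub>R \<Lambda>b - (\<epsilon> * \<zeta>\<^sup>2 / 2) *\<^sub>R mat 1) *v Wbar
                       + integral {0..\<zeta>}
                          (\<lambda>y. mexp ((\<zeta> - y) *\<^sub>R \<Lambda>b - (\<epsilon> * \<zeta>\<^sup>2 / 2) *\<^sub>R mat 1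
                                      + (\<epsilon> * y\<^sup>2 / 2) *\<^sub>R mat 1)
                             *v (((\<Lambda> (V y) (W y) (\<epsilon> * y) \<epsilon> - \<Lambda>b)
                                  - (\<epsilon> * y) *\<^sub>R (\<Upsilon> (V y) (W y) (\<epsilon> * y) \<epsilon> - mat 1))
                                 *v W y))) \<and>
                  (\<forall>\<zeta>\<in>{0..L}. norm (V \<zeta> - Ubar) \<le> (1/2) * \<delta> \<and>
                                 norm (W \<zeta>) \<le> cW * exp (- c * \<zeta> / 2) * \<delta>))
            in (\<exists>V W. sol V W) \<and>
               (\<forall>V1 W1 V2 W2. sol V1 W1 \<and> sol V2 W2 \<longrightarrow>
                  (\<forall>\<zeta>\<in>{0..L}. V1 \<zeta> = V2 \<zeta> \<and> W1 \<zeta> = W2 \<zeta>)))"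
  unfolding Let_def L_def[symmetric]
  using sol_exists sol_unique unfolding solP_def by blast

end


lemma boxset_eq: "boxset Ub r = cball Ub r \<times> cball 0 r \<times> cball 0 r \<times> cball 0 r"
  by (auto simp: boxset_def inbox_def dist_norm norm_minus_commute)

lemma compact_box: "compact (boxset Ub r)"
  unfolding boxset_eq by (intro compact_Times compact_cball)

lemma convex_box: "convex (boxset Ub r)"
  unfolding boxset_eq by (intro convex_Times convex_cball)

lemma lip_op:
  fixes F :: "real^'n \<Rightarrow> real^'k \<Rightarrow> real \<Rightarrow> real \<Rightarrow> real^'a^'b"
  assumes sm: "smooth_on D (\<lambda>(V, W, \<xi>, e). F V W \<xi> e)" and sub: "boxset Ub r \<subseteq> D"
  shows "\<exists>B\<ge>0. \<forall>V1 (W1::real^'k) \<xi>1 e1 V2 (W2::real^'k) \<xi>2 e2 w. inbox Ub r V1 W1 \<xi>1 e1 \<longrightarrow> inbox Ub r V2 W2 \<xi>2 e2 \<longrightarrow>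
     norm ((F V1 W1 \<xi>1 e1 - F V2 W2 \<xi>2 e2) *v w) \<le> B * (norm (V1 - V2) + norm (W1 - W2) + \<bar>\<xi>1 - \<xi>2\<bar> + \<bar>e1 - e2\<bar>) * norm w"
proof -
  obtain B where B: "\<forall>x\<in>boxset Ub r. \<forall>y\<in>boxset Ub r.
      norm ((\<lambda>(V, W, \<xi>, e). F V W \<xi> e) x - (\<lambda>(V, W, \<xi>, e). F V W \<xi> e) y) \<le> B * norm (x - y)"
    using smooth_lip[OF sm sub compact_box convex_box] by blast
  let ?C = "real CARD('b) * real CARD('a)"
  show ?thesis
  proof (intro exI[of _ "?C * \<bar>B\<bar>"] conjI allI impI)
    show "0 \<le> ?C * \<bar>B\<bar>" by simp
    fix V1 V2 :: "real^'n" and W1 W2 :: "real^'k" and \<xi>1 e1 \<xi>2 e2 :: real and w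
    assume i1: "inbox Ub r V1 W1 \<xi>1 e1" and i2: "inbox Ub r V2 W2 \<xi>2 e2"
    let ?X = "norm (V1 - V2) + norm (W1 - W2) + \<bar>\<xi>1 - \<xi>2\<bar> + \<bar>e1 - e2\<bar>"
    have "norm (F V1 W1 \<xi>1 e1 - F V2 W2 \<xi>2 e2) \<le> B * norm ((V1, W1, \<xi>1, e1) - (V2, W2, \<xi>2, e2))"
      using B i1 i2 unfolding boxset_def by force
    also have "\<dots> \<le> \<bar>B\<bar> * norm ((V1, W1, \<xi>1, e1) - (V2, W2, \<xi>2, e2))"
      by (intro mult_right_mono) auto
    also have "\<dots> \<le> \<bar>B\<bar> * ?X"
      by (intro mult_left_mono) (auto intro: order_trans[OF _ norm_tuple_le])
    finally have nF: "norm (F V1 W1 \<xi>1 e1 - F V2 W2 \<xi>2 e2) \<le> \<bar>B\<bar> * ?X" .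
    have "norm ((F V1 W1 \<xi>1 e1 - F V2 W2 \<xi>2 e2) *v w) \<le> (?C * norm (F V1 W1 \<xi>1 e1 - F V2 W2 \<xi>2 e2)) * norm w"
      by (rule norm_mv_le)
    also have "\<dots> \<le> (?C * (\<bar>B\<bar> * ?X)) * norm w"
      using nF by (intro mult_right_mono mult_left_mono) auto
    finally show "norm ((F V1 W1 \<xi>1 e1 - F V2 W2 \<xi>2 e2) *v w) \<le> ?C * \<bar>B\<bar> * ?X * norm w"
      by (simp add: mult_ac)
  qed
qed

lemma bnd_op:
  fixes F :: "real^'n \<Rightarrow> real^'k \<Rightarrow> real \<Rightarrow> real \<Rightarrow> real^'a^'b"
  assumes sm: "smooth_on D (\<lambda>(V, W, \<xi>, e). F V W \<xi> e)" and sub: "boxset Ub r \<subseteq> D"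
  shows "\<exists>B\<ge>0. \<forall>V (W::real^'k) \<xi> e w. inbox Ub r V W \<xi> e \<longrightarrow> norm (F V W \<xi> e *v w) \<le> B * norm w"
proof -
  have "continuous_on (boxset Ub r) (\<lambda>(V, W, \<xi>, e). F V W \<xi> e)" by (rule smooth_cont[OF sm sub])
  then have "bounded ((\<lambda>(V, W, \<xi>, e). F V W \<xi> e) ` boxset Ub r)"
    using compact_box compact_continuous_image compact_imp_bounded by blast
  then obtain K where K: "\<forall>p\<in>boxset Ub r. norm ((\<lambda>(V, W, \<xi>, e). F V W \<xi> e) p) \<le> K"
    unfolding bounded_iff by blast
  let ?C = "real CARD('b) * real CARD('a)"
  show ?thesis
  proof (intro exI[of _ "?C * \<bar>K\<bar>"] conjI allI impI)
    show "0 \<le> ?C * \<bar>K\<bar>" by simp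
    fix V :: "real^'n" and W :: "real^'k" and \<xi> e :: real and w assume i: "inbox Ub r V W \<xi> e"
    have nF: "norm (F V W \<xi> e) \<le> \<bar>K\<bar>" using K i unfolding boxset_def by force
    have "norm (F V W \<xi> e *v w) \<le> (?C * norm (F V W \<xi> e)) * norm w" by (rule norm_mv_le)
    also have "\<dots> \<le> (?C * \<bar>K\<bar>) * norm w" using nF by (intro mult_right_mono mult_left_mono) auto
    finally show "norm (F V W \<xi> e *v w) \<le> ?C * \<bar>K\<bar> * norm w" .
  qed
qed

theorem lemma3p2:
  fixes A :: "real^'n \<Rightarrow> real^'n^'n"
    and c :: real
    and Ubar :: "real^'n"
    and \<delta>\<^sub>1 :: real
    and \<Psi> :: "real^'n \<Rightarrow> real^'k \<Rightarrow> real \<Rightarrow> real \<Rightarrow> real^'k^'n"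
    and \<Lambda> :: "real^'n \<Rightarrow> real^'k \<Rightarrow> real \<Rightarrow> real \<Rightarrow> real^'k^'k"
    and \<Upsilon> :: "real^'n \<Rightarrow> real^'k \<Rightarrow> real \<Rightarrow> real \<Rightarrow> real^'k^'k"
    and D :: "((real^'n) \<times> (real^'k) \<times> real \<times> real) set"
    and Ueps :: "real \<Rightarrow> real^'n"
    and d :: "'k \<Rightarrow> real"
  assumes c_pos: "c > 0"
    and A_smooth: "smooth_on UNIV A"
    and A_hyp: "\<forall>U. hyperbolic_gap (A U) TYPE('k) c"
    and \<delta>\<^sub>1_pos: "\<delta>\<^sub>1 > 0"
    and D_open: "open D"
    and D_box: "{(V, W, \<xi>, \<epsilon>). norm (V - Ubar) \<le> \<delta>\<^sub>1 \<and> norm W \<le> \<delta>\<^sub>1 \<and> \<bar>\<xi>\<bar> \<le> \<delta>\<^sub>1 \<and> \<bar>\<epsilon>\<bar> \<le> \<delta>\<^sub>1} \<subseteq> D"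
    and \<Psi>_smooth: "smooth_on D (\<lambda>(V, W, \<xi>, \<epsilon>). \<Psi> V W \<xi> \<epsilon>)"
    and \<Lambda>_smooth: "smooth_on D (\<lambda>(V, W, \<xi>, \<epsilon>). \<Lambda> V W \<xi> \<epsilon>)"
    and \<Upsilon>_smooth: "smooth_on D (\<lambda>(V, W, \<xi>, \<epsilon>). \<Upsilon> V W \<xi> \<epsilon>)"
    and d_inj: "inj d"
    and d_range: "range d = {l\<in>real_eigenvalues (A Ubar). l < 0}"
    and \<Lambda>_bar: "\<Lambda> Ubar 0 0 0 = diag_mat d"
    and \<Upsilon>_bar: "\<Upsilon> Ubar 0 0 0 = mat 1"
    and Ueps_lim: "(Ueps \<longlongrightarrow> Ubar) (at_right 0)"
  shows "\<exists>\<delta>\<^sub>0>0. \<forall>\<delta>. 0 < \<delta> \<and> \<delta> < \<delta>\<^sub>0 \<longrightarrow>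
     (\<exists>cV \<theta> cW. 0 < cV \<and> cV < 1 \<and> 0 < \<theta> \<and> \<theta> < 1 \<and> 0 < cW \<and> cW < 1 \<and>
       (\<exists>\<epsilon>\<^sub>0>0. \<forall>\<epsilon>. 0 < \<epsilon> \<and> \<epsilon> < \<epsilon>\<^sub>0 \<longrightarrow>
         (\<forall>Wbar :: real^'k. norm Wbar \<le> \<theta> * \<delta> \<longrightarrow>
           (let \<Lambda>b = \<Lambda> Ubar 0 0 0;
                L = \<delta> / \<epsilon>;
                sol = (\<lambda>(V :: real \<Rightarrow> real^'n) (W :: real \<Rightarrow> real^'k).
                  continuous_on {0..L} V \<and> continuous_on {0..L} W \<and>
                  (\<forall>\<zeta>\<in>{0..L}.
                     V \<zeta> = Ueps \<epsilon> - integral {\<zeta>..L}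
                              (\<lambda>y. \<Psi> (V y) (W y) (\<epsilon> * y) \<epsilon> *v W y)) \<and>
                  (\<forall>\<zeta>\<in>{0..L}.
                     W \<zeta> = mexp (\<zeta> *\<^sub>R \<Lambda>b - (\<epsilon> * \<zeta>\<^sup>2 / 2) *\<^sub>R mat 1) *v Wbar
                       + integral {0..\<zeta>}
                          (\<lambda>y. mexp ((\<zeta> - y) *\<^sub>R \<Lambda>b - (\<epsilon> * \<zeta>\<^sup>2 / 2) *\<^sub>R mat 1
                                      + (\<epsilon> * y\<^sup>2 / 2) *\<^sub>R mat 1)
                             *v (((\<Lambda> (V y) (W y) (\<epsilon> * y) \<epsilon> - \<Lambda>b)
                                  - (\<epsilon> * y) *\<^sub>R (\<Upsilon> (V y) (W y) (\<epsilon> * y) \<epsilon> - mat 1))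
                                 *v W y))) \<and>
                  (\<forall>\<zeta>\<in>{0..L}. norm (V \<zeta> - Ubar) \<le> cV * \<delta> \<and>
                                 norm (W \<zeta>) \<le> cW * exp (- c * \<zeta> / 2) * \<delta>))
            in (\<exists>V W. sol V W) \<and>
               (\<forall>V1 W1 V2 W2. sol V1 W1 \<and> sol V2 W2 \<longrightarrow>
                  (\<forall>\<zeta>\<in>{0..L}. V1 \<zeta> = V2 \<zeta> \<and> W1 \<zeta> = W2 \<zeta>))))))"
proof -
  have d_neg: "d i < - c" for i
  proof -
    have "d i \<in> range d" by simp
    then have di: "d i \<in> real_eigenvalues (A Ubar)" "d i < 0" using d_range by auto
    have "\<forall>l\<in>real_eigenvalues (A Ubar). l < -c \<or> c < l"
      using A_hyp unfolding hyperbolic_gap_def by blast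
    then show ?thesis using di c_pos by force
  qed
  have sub: "boxset Ubar \<delta>\<^sub>1 \<subseteq> D" using D_box by (simp add: boxset_def inbox_def)
  obtain B1 where B1: "B1 \<ge> 0" "\<forall>V1 W1 \<xi>1 e1 V2 W2 \<xi>2 e2 w. inbox Ubar \<delta>\<^sub>1 V1 W1 \<xi>1 e1 \<longrightarrow> inbox Ubar \<delta>\<^sub>1 V2 W2 \<xi>2 e2 \<longrightarrow>
     norm ((\<Psi> V1 W1 \<xi>1 e1 - \<Psi> V2 W2 \<xi>2 e2) *v w) \<le> B1 * (norm (V1 - V2) + norm (W1 - W2) + \<bar>\<xi>1 - \<xi>2\<bar> + \<bar>e1 - e2\<bar>) * norm w"
    using lip_op[OF \<Psi>_smooth sub] by blast
  obtain B2 where B2: "B2 \<ge> 0" "\<forall>V1 W1 \<xi>1 e1 V2 W2 \<xi>2 e2 w. inbox Ubar \<delta>\<^sub>1 V1 W1 \<xi>1 e1 \<longrightarrow> inbox Ubar \<delta>\<^sub>1 V2 W2 \<xi>2 e2 \<longrightarrow>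
     norm ((\<Lambda> V1 W1 \<xi>1 e1 - \<Lambda> V2 W2 \<xi>2 e2) *v w) \<le> B2 * (norm (V1 - V2) + norm (W1 - W2) + \<bar>\<xi>1 - \<xi>2\<bar> + \<bar>e1 - e2\<bar>) * norm w"
    using lip_op[OF \<Lambda>_smooth sub] by blast
  obtain B3 where B3: "B3 \<ge> 0" "\<forall>V1 W1 \<xi>1 e1 V2 W2 \<xi>2 e2 w. inbox Ubar \<delta>\<^sub>1 V1 W1 \<xi>1 e1 \<longrightarrow> inbox Ubar \<delta>\<^sub>1 V2 W2 \<xi>2 e2 \<longrightarrow>
     norm ((\<Upsilon> V1 W1 \<xi>1 e1 - \<Upsilon> V2 W2 \<xi>2 e2) *v w) \<le> B3 * (norm (V1 - V2) + norm (W1 - W2) + \<bar>\<xi>1 - \<xi>2\<bar> + \<bar>e1 - e2\<bar>) * norm w"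
    using lip_op[OF \<Upsilon>_smooth sub] by blast
  obtain BM where BM: "BM \<ge> 0" "\<forall>V W \<xi> e w. inbox Ubar \<delta>\<^sub>1 V W \<xi> e \<longrightarrow> norm (\<Psi> V W \<xi> e *v w) \<le> BM * norm w"
    using bnd_op[OF \<Psi>_smooth sub] by blast
  define Lp where "Lp = 1 + B1 + B2 + B3"
  define M where "M = c + BM"
  have mono: "B * X * norm w \<le> Lp * X * norm w" if "0 \<le> B" "B \<le> Lp" "0 \<le> X" for B X and w :: "real^'k"
    using that by (intro mult_right_mono) auto
  have ds0: "0 \<le> norm (V1 - V2) + norm (W1 - W2) + \<bar>\<xi>1 - \<xi>2\<bar> + \<bar>e1 - e2\<bar>"
    for V1 V2 :: "real^'n" and W1 W2 :: "real^'k" and \<xi>1 \<xi>2 e1 e2 :: real by simp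
  interpret C: ctx c \<delta>\<^sub>1 Lp M Ubar \<Psi> \<Lambda> \<Upsilon> d
  proof
    show "c > 0" "\<delta>\<^sub>1 > 0" by (fact c_pos, fact \<delta>\<^sub>1_pos)
    show "Lp \<ge> 1" using B1 B2 B3 by (simp add: Lp_def)
    show "M \<ge> c" using BM by (simp add: M_def)
    show "\<And>i. d i < - c" by (rule d_neg)
    show "\<Lambda> Ubar 0 0 0 = diag_mat d" "\<Upsilon> Ubar 0 0 0 = mat 1" by (fact \<Lambda>_bar, fact \<Upsilon>_bar)
    show "continuous_on (boxset Ubar \<delta>\<^sub>1) (\<lambda>(V, W, \<xi>, e). \<Psi> V W \<xi> e)" by (rule smooth_cont[OF \<Psi>_smooth sub])
    show "continuous_on (boxset Ubar \<delta>\<^sub>1) (\<lambda>(V, W, \<xi>, e). \<Lambda> V W \<xi> e)" by (rule smooth_cont[OF \<Lambda>_smooth sub])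
    show "continuous_on (boxset Ubar \<delta>\<^sub>1) (\<lambda>(V, W, \<xi>, e). \<Upsilon> V W \<xi> e)" by (rule smooth_cont[OF \<Upsilon>_smooth sub])
    fix V1 V2 :: "real^'n" and W1 W2 :: "real^'k" and \<xi>1 e1 \<xi>2 e2 :: real and w :: "real^'k"
    assume i1: "inbox Ubar \<delta>\<^sub>1 V1 W1 \<xi>1 e1" and i2: "inbox Ubar \<delta>\<^sub>1 V2 W2 \<xi>2 e2"
    show "norm ((\<Psi> V1 W1 \<xi>1 e1 - \<Psi> V2 W2 \<xi>2 e2) *v w) \<le> Lp * (norm (V1 - V2) + norm (W1 - W2) + \<bar>\<xi>1 - \<xi>2\<bar> + \<bar>e1 - e2\<bar>) * norm w"
    proof -
      have "B1 \<le> Lp" using B2 B3 by (simp add: Lp_def)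
      then show ?thesis using B1(2) i1 i2 mono[OF B1(1) _ ds0] by (meson order_trans)
    qed
    show "norm ((\<Lambda> V1 W1 \<xi>1 e1 - \<Lambda> V2 W2 \<xi>2 e2) *v w) \<le> Lp * (norm (V1 - V2) + norm (W1 - W2) + \<bar>\<xi>1 - \<xi>2\<bar> + \<bar>e1 - e2\<bar>) * norm w"
    proof -
      have "B2 \<le> Lp" using B1 B3 by (simp add: Lp_def)
      then show ?thesis using B2(2) i1 i2 mono[OF B2(1) _ ds0] by (meson order_trans)
    qed
    show "norm ((\<Upsilon> V1 W1 \<xi>1 e1 - \<Upsilon> V2 W2 \<xi>2 e2) *v w) \<le> Lp * (norm (V1 - V2) + norm (W1 - W2) + \<bar>\<xi>1 - \<xi>2\<bar> + \<bar>e1 - e2\<bar>) * norm w"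
    proof -
      have "B3 \<le> Lp" using B1 B2 by (simp add: Lp_def)
      then show ?thesis using B3(2) i1 i2 mono[OF B3(1) _ ds0] by (meson order_trans)
    qed
  next
    fix V :: "real^'n" and W :: "real^'k" and \<xi> e :: real and w :: "real^'k" assume i: "inbox Ubar \<delta>\<^sub>1 V W \<xi> e"
    have "BM * norm w \<le> M * norm w" using c_pos by (intro mult_right_mono) (auto simp: M_def)
    then show "norm (\<Psi> V W \<xi> e *v w) \<le> M * norm w" using BM(2) i by (meson order_trans)
  qed
  have lam8: "C.lam \<ge> 8" by (rule C.lam_ge)
  have Lp1: "Lp \<ge> 1" using B1 B2 B3 by (simp add: Lp_def)
  define \<delta>0 where "\<delta>0 = min \<delta>\<^sub>1 (min 1 (c / (100 * Lp * C.lam)))"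
  have \<delta>0_pos: "\<delta>0 > 0" using \<delta>\<^sub>1_pos c_pos lam8 Lp1 by (simp add: \<delta>0_def)
  show ?thesis
    apply (rule exI[of _ \<delta>0])
    apply (intro conjI allI impI)
    subgoal by (rule \<delta>0_pos)
    subgoal premises \<delta> for \<delta>
    proof -
      have \<delta>1: "\<delta> \<le> \<delta>\<^sub>1" and \<delta>one: "\<delta> \<le> 1" and \<delta>p: "0 < \<delta>" using \<delta> by (auto simp: \<delta>0_def)
      have "\<delta> \<le> c / (100 * Lp * C.lam)" using \<delta> by (auto simp: \<delta>0_def)
      then have \<delta>sm: "100 * Lp * C.lam * \<delta> \<le> c"
        using lam8 Lp1 by (simp add: le_divide_eq mult_ac)
      obtain b where b: "b > 0" "\<And>e. e > 0 \<Longrightarrow> e < b \<Longrightarrow> dist (Ueps e) Ubar < \<delta> / 4"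
      proof -
        have "eventually (\<lambda>e. dist (Ueps e) Ubar < \<delta> / 4) (at_right 0)"
          using Ueps_lim \<delta>p unfolding tendsto_iff by (metis divide_pos_pos zero_less_numeral)
        then show ?thesis using that unfolding eventually_at_right_field by auto
      qed
      show ?thesis
        apply (rule exI[of _ "1/2"], rule exI[of _ C.\<theta>], rule exI[of _ C.cW])
        apply (intro conjI)
        subgoal by simp
        subgoal by simp
        subgoal using C.cW_pos by (simp add: C.\<theta>_def)
        subgoal using C.cW_le by (simp add: C.\<theta>_def)
        subgoal using C.cW_pos by simp
        subgoal using C.cW_le by simp
        apply (rule exI[of _ "min b \<delta>"])
        apply (intro conjI allI impI)
        subgoal using b \<delta>p by simp
        subgoal premises prems for \<epsilon> Wbar
        proof -
          have e: "0 < \<epsilon> \<and> \<epsilon> < min b \<delta>" and Wb: "norm Wbar \<le> C.\<theta> * \<delta>" using prems by auto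
          have U0: "norm (Ueps \<epsilon> - Ubar) \<le> \<delta> / 4" using b(2)[of \<epsilon>] e by (simp add: dist_norm)
          interpret F: fp c \<delta>\<^sub>1 Lp M Ubar \<Psi> \<Lambda> \<Upsilon> d \<delta> \<epsilon> Wbar "Ueps \<epsilon>"
            by (intro fp.intro C.ctx_axioms fp_axioms.intro) (use \<delta>p \<delta>1 \<delta>one \<delta>sm e U0 Wb in auto)
          show ?thesis by (rule F.final_form)
        qed
        done
    qed
    done
qed


end
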